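(* Let $\mathcal{S},\mathcal{A}$ be finite, $\gamma\in(0,1)$, $\alpha\in(0,1)$, and let $\pi$ be a fixed stochastic policy. For each $(s,a)$, $(\tilde r(s,a),\tilde s')\sim P(\cdot,\cdot\mid s,a)$ with $\tilde r(s,a)\in[0,1]$ almost surely and $\tilde r(s,a)$ having a bounded density. Consider the iteration: at each step $t$, for each $(s,a)$ a sample $(r,s')$ is drawn from $P(\cdot,\cdot\mid s,a)$, conditionally independently of the past given $(s,a)$, and $$Q_{t+1}(s,a)=Q_t(s,a)+2\zeta_t(s,a)\big[(1-\alpha)\big(r+\gamma V_t(s')-Q_t(s,a)\big)_-+\alpha\big(r+\gamma V_t(s')-Q_t(s,a)\big)_+\big],$$ where $V_t(s')=\sum_{a'}\pi(a'\mid s')Q_t(s',a')$, and the nonnegative (possibly history-dependent) learning rates satisfy $\sum_{t=0}^\infty\zeta_t(s,a)=\infty$ and $\sum_{t=0}^\infty\zeta_t(s,a)^2<\infty$ for all $(s,a)$ (components not updated at step $t$ have $\zeta_t(s,a)=0$). Then $Q_t(s,a)\to Q^\pi(s,a)$ almost surely for all $(s,a)$, where $Q^\pi$ is the dynamic-expectile action-value function of $\pi$.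
   Context: $(x)_-:=\min(x,0)$, $(x)_+:=\max(x,0)$. The $\alpha$-expectile of a random variable $\tilde x$ is $\mathrm{Expectile}_\alpha[\tilde x]=\arg\min_{y\in\mathbb{R}}(1-\alpha)\mathbb{E}[(\tilde x-y)_-^2]+\alpha\mathbb{E}[(\tilde x-y)_+^2]$. With $\rho=\mathrm{Expectile}_\alpha$, the Bellman operator of $\pi$ is $(\mathcal{T}^\pi Q)(s,a)=\rho\big(\tilde r(s,a)+\gamma\sum_{a'}\pi(a'\mid\tilde s')Q(\tilde s',a')\big)$, $\rho$ taken over the joint law of $(\tilde r(s,a),\tilde s')$, and $Q^\pi$ is its unique fixed point. *)

theory Defs
  imports "HOL-Probability.Probability"
begin

definition negpart :: "real \<Rightarrow> real" where "negpart x = min x 0"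
definition pospart :: "real \<Rightarrow> real" where "pospart x = max x 0"

definition expectile_loss :: "real \<Rightarrow> real measure \<Rightarrow> real \<Rightarrow> real" where
  "expectile_loss \<alpha> \<mu> y =
     (1 - \<alpha>) * (\<integral>x. (negpart (x - y))\<^sup>2 \<partial>\<mu>) + \<alpha> * (\<integral>x. (pospart (x - y))\<^sup>2 \<partial>\<mu>)"

definition expectile :: "real \<Rightarrow> real measure \<Rightarrow> real" where
  "expectile \<alpha> \<mu> = (SOME y. \<forall>z. expectile_loss \<alpha> \<mu> y \<le> expectile_loss \<alpha> \<mu> z)"

definition Vpol :: "('s::finite \<Rightarrow> 'a::finite \<Rightarrow> real) \<Rightarrow> ('s \<Rightarrow> 'a \<Rightarrow> real) \<Rightarrow> 's \<Rightarrow> real" where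
  "Vpol \<pi> Q s = (\<Sum>a'\<in>UNIV. \<pi> s a' * Q s a')"

definition bellman_exp ::
  "real \<Rightarrow> real \<Rightarrow> ('s::finite \<Rightarrow> 'a::finite \<Rightarrow> (real \<times> 's) measure)
   \<Rightarrow> ('s \<Rightarrow> 'a \<Rightarrow> real) \<Rightarrow> ('s \<Rightarrow> 'a \<Rightarrow> real) \<Rightarrow> ('s \<Rightarrow> 'a \<Rightarrow> real)" where
  "bellman_exp \<alpha> \<gamma> P \<pi> Q = (\<lambda>s a.
     expectile \<alpha> (distr (P s a) borel (\<lambda>(r, s'). r + \<gamma> * Vpol \<pi> Q s')))"

definition Qpi ::
  "real \<Rightarrow> real \<Rightarrow> ('s::finite \<Rightarrow> 'a::finite \<Rightarrow> (real \<times> 's) measure)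
   \<Rightarrow> ('s \<Rightarrow> 'a \<Rightarrow> real) \<Rightarrow> ('s \<Rightarrow> 'a \<Rightarrow> real)" where
  "Qpi \<alpha> \<gamma> P \<pi> = (THE Q. bellman_exp \<alpha> \<gamma> P \<pi> Q = Q)"

end

theory Submission
  imports Defs
begin

definition gfun :: "real \<Rightarrow> real \<Rightarrow> real" where
  "gfun \<alpha> u = (1-\<alpha>) * negpart u + \<alpha> * pospart u"
definition lfun :: "real \<Rightarrow> real \<Rightarrow> real" where
  "lfun \<alpha> u = (1-\<alpha>) * (negpart u)\<^sup>2 + \<alpha> * (pospart u)\<^sup>2"

lemma gfun_slope:
  assumes "0 < \<alpha>" "\<alpha> < 1" "v \<le> u"
  shows "min \<alpha> (1-\<alpha>) * (u - v) \<le> gfun \<alpha> u - gfun \<alpha> v"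
    and "gfun \<alpha> u - gfun \<alpha> v \<le> max \<alpha> (1-\<alpha>) * (u - v)"
proof -
  have d: "0 \<le> u - v" using assms by simp
  consider "0 \<le> v" | "v < 0" "0 \<le> u" | "u < 0" using assms by linarith
  then have "min \<alpha> (1-\<alpha>) * (u - v) \<le> gfun \<alpha> u - gfun \<alpha> v
      \<and> gfun \<alpha> u - gfun \<alpha> v \<le> max \<alpha> (1-\<alpha>) * (u - v)"
  proof cases
    case 1
    then have "gfun \<alpha> u - gfun \<alpha> v = \<alpha> * (u - v)" using assms
      by (simp add: gfun_def negpart_def pospart_def algebra_simps)
    then show ?thesis using d by (simp add: mult_right_mono)
  next
    case 2
    then have e: "gfun \<alpha> u - gfun \<alpha> v = \<alpha> * u - (1-\<alpha>) * v" using assms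
      by (simp add: gfun_def negpart_def pospart_def algebra_simps)
    have a1: "min \<alpha> (1-\<alpha>) * u \<le> \<alpha> * u" using 2 by (simp add: mult_right_mono)
    have a2: "min \<alpha> (1-\<alpha>) * (-v) \<le> (1-\<alpha>) * (-v)" using 2 by (simp add: mult_right_mono)
    have a3: "\<alpha> * u \<le> max \<alpha> (1-\<alpha>) * u" using 2 by (simp add: mult_right_mono)
    have a4: "(1-\<alpha>) * (-v) \<le> max \<alpha> (1-\<alpha>) * (-v)" using 2 by (simp add: mult_right_mono)
    show ?thesis unfolding e using a1 a2 a3 a4 by (simp add: algebra_simps)
  next
    case 3
    then have "gfun \<alpha> u - gfun \<alpha> v = (1-\<alpha>) * (u - v)" using assms
      by (simp add: gfun_def negpart_def pospart_def algebra_simps)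
    then show ?thesis using d by (simp add: mult_right_mono)
  qed
  then show "min \<alpha> (1-\<alpha>) * (u - v) \<le> gfun \<alpha> u - gfun \<alpha> v"
    and "gfun \<alpha> u - gfun \<alpha> v \<le> max \<alpha> (1-\<alpha>) * (u - v)" by auto
qed

lemma lfun_ineq:
  assumes "0 < \<alpha>" "\<alpha> < 1"
  shows "lfun \<alpha> u + 2 * gfun \<alpha> u * d + min \<alpha> (1-\<alpha>) * d\<^sup>2 \<le> lfun \<alpha> (u + d)"
proof -
  define m where "m = min \<alpha> (1-\<alpha>)"
  have m1: "m \<le> \<alpha>" "m \<le> 1 - \<alpha>" "0 \<le> m" using assms by (auto simp: m_def)
  have sq: "0 \<le> d\<^sup>2" by simp
  consider "0 \<le> u" "0 \<le> u + d" | "0 \<le> u" "u + d < 0" | "u < 0" "0 \<le> u + d" | "u < 0" "u + d < 0"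
    by linarith
  then show ?thesis
  proof cases
    case 1
    then have "lfun \<alpha> (u + d) - (lfun \<alpha> u + 2 * gfun \<alpha> u * d + m * d\<^sup>2) = (\<alpha> - m) * d\<^sup>2"
      by (simp add: lfun_def gfun_def negpart_def pospart_def power2_eq_square algebra_simps)
    then show ?thesis using m1 sq unfolding m_def[symmetric] by (smt (verit) mult_nonneg_nonneg)
  next
    case 2
    define v where "v = u + d"
    have "lfun \<alpha> (u + d) - (lfun \<alpha> u + 2 * gfun \<alpha> u * d + m * d\<^sup>2)
       = (1-\<alpha>-m) * v\<^sup>2 + (\<alpha>-m) * u\<^sup>2 + 2 * (\<alpha>-m) * (u * (-v))"
      using 2 unfolding v_def
      by (simp add: lfun_def gfun_def negpart_def pospart_def power2_eq_square algebra_simps)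
    moreover have "0 \<le> u * (-v)" using 2 v_def by simp
    ultimately show ?thesis using m1 unfolding m_def[symmetric]
      by (smt (verit) mult_nonneg_nonneg zero_le_power2)
  next
    case 3
    define v where "v = u + d"
    have "lfun \<alpha> (u + d) - (lfun \<alpha> u + 2 * gfun \<alpha> u * d + m * d\<^sup>2)
       = (\<alpha>-m) * v\<^sup>2 + (1-\<alpha>-m) * u\<^sup>2 + 2 * (1-\<alpha>-m) * ((-u) * v)"
      using 3 unfolding v_def
      by (simp add: lfun_def gfun_def negpart_def pospart_def power2_eq_square algebra_simps)
    moreover have "0 \<le> (-u) * v" using 3 v_def by (intro mult_nonneg_nonneg) auto
    ultimately show ?thesis using m1 unfolding m_def[symmetric]
      by (smt (verit) mult_nonneg_nonneg zero_le_power2)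
  next
    case 4
    then have "lfun \<alpha> (u + d) - (lfun \<alpha> u + 2 * gfun \<alpha> u * d + m * d\<^sup>2) = (1 - \<alpha> - m) * d\<^sup>2"
      by (simp add: lfun_def gfun_def negpart_def pospart_def power2_eq_square algebra_simps)
    then show ?thesis using m1 sq unfolding m_def[symmetric] by (smt (verit) mult_nonneg_nonneg)
  qed
qed

lemma gfun_abs: assumes "0 < \<alpha>" "\<alpha> < 1" shows "\<bar>gfun \<alpha> u\<bar> \<le> \<bar>u\<bar>"
proof (cases "0 \<le> u")
  case True
  then have "gfun \<alpha> u = \<alpha> * u" by (simp add: gfun_def negpart_def pospart_def)
  then show ?thesis using True assms by (simp add: abs_mult mult_left_le_one_le)
next
  case False
  then have "gfun \<alpha> u = (1-\<alpha>) * u" by (simp add: gfun_def negpart_def pospart_def)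
  then show ?thesis using False assms by (simp add: abs_mult mult_left_le_one_le)
qed

lemma gfun_nonneg: "0 < \<alpha> \<Longrightarrow> \<alpha> < 1 \<Longrightarrow> 0 \<le> u \<Longrightarrow> 0 \<le> gfun \<alpha> u"
  by (auto simp: gfun_def negpart_def pospart_def)

lemma gfun_nonpos: "0 < \<alpha> \<Longrightarrow> \<alpha> < 1 \<Longrightarrow> u \<le> 0 \<Longrightarrow> gfun \<alpha> u \<le> 0"
  by (auto simp: gfun_def negpart_def pospart_def mult_nonneg_nonpos)

lemma gfun_mono: "0 < \<alpha> \<Longrightarrow> \<alpha> < 1 \<Longrightarrow> v \<le> u \<Longrightarrow> gfun \<alpha> v \<le> gfun \<alpha> u"
proof -
  assume h: "0 < \<alpha>" "\<alpha> < 1" "v \<le> u"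
  have "0 \<le> min \<alpha> (1-\<alpha>) * (u - v)" using h by simp
  then show ?thesis using gfun_slope(1)[OF h] by linarith
qed

lemma gfun_measurable[measurable]: "gfun \<alpha> \<in> borel_measurable borel"
  unfolding gfun_def negpart_def pospart_def by measurable

lemma lfun_measurable[measurable]: "lfun \<alpha> \<in> borel_measurable borel"
  unfolding lfun_def negpart_def pospart_def by measurable

lemma lfun_le: assumes "0 < \<alpha>" "\<alpha> < 1" shows "\<bar>lfun \<alpha> u\<bar> \<le> u\<^sup>2"
proof (cases "0 \<le> u")
  case True
  then have "lfun \<alpha> u = \<alpha> * u\<^sup>2" by (simp add: lfun_def negpart_def pospart_def)
  then show ?thesis using True assms by (simp add: abs_mult mult_left_le_one_le)
next
  case False
  then have "lfun \<alpha> u = (1-\<alpha>) * u\<^sup>2" by (simp add: lfun_def negpart_def pospart_def)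
  then show ?thesis using False assms by (simp add: abs_mult mult_left_le_one_le)
qed

locale expm = prob_space \<mu> for \<mu> :: "real measure" +
  fixes K \<alpha> :: real
  assumes sets_mu: "sets \<mu> = sets borel"
    and bnd: "AE x in \<mu>. \<bar>x\<bar> \<le> K"
    and a0: "0 < \<alpha>" and a1: "\<alpha> < 1"
begin

lemma meas_mu: "f \<in> borel_measurable borel \<Longrightarrow> f \<in> borel_measurable \<mu>"
  by (subst measurable_cong_sets[OF sets_mu refl]) simp

lemma int_bnd:
  fixes C :: real
  assumes "f \<in> borel_measurable borel" "\<And>x. \<bar>x\<bar> \<le> K \<Longrightarrow> \<bar>f x\<bar> \<le> C"
  shows "integrable \<mu> f"
proof (rule integrable_const_bound[where B=C])
  show "AE x in \<mu>. norm (f x) \<le> C" using bnd by eventually_elim (use assms in auto)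
  show "f \<in> borel_measurable \<mu>" by (rule meas_mu) (rule assms(1))
qed

definition Phi :: "real \<Rightarrow> real" where "Phi q = (\<integral>x. gfun \<alpha> (x - q) \<partial>\<mu>)"

lemma int_g: "integrable \<mu> (\<lambda>x. gfun \<alpha> (x - q))"
proof (rule int_bnd[where C="K + \<bar>q\<bar>"])
  fix x :: real assume "\<bar>x\<bar> \<le> K"
  then show "\<bar>gfun \<alpha> (x - q)\<bar> \<le> K + \<bar>q\<bar>" using gfun_abs[OF a0 a1, of "x - q"] by linarith
qed simp

lemma int_l: "integrable \<mu> (\<lambda>x. lfun \<alpha> (x - q))"
proof (rule int_bnd[where C="(K + \<bar>q\<bar>)\<^sup>2"])
  fix x :: real assume x: "\<bar>x\<bar> \<le> K"
  have "\<bar>lfun \<alpha> (x - q)\<bar> \<le> (x - q)\<^sup>2" using lfun_le[OF a0 a1] .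
  also have "\<dots> = \<bar>x - q\<bar>\<^sup>2" by simp
  also have "\<dots> \<le> (K + \<bar>q\<bar>)\<^sup>2" using x by (intro power_mono) auto
  finally show "\<bar>lfun \<alpha> (x - q)\<bar> \<le> (K + \<bar>q\<bar>)\<^sup>2" .
qed simp

lemma int_mu_const: "(\<integral>x. c \<partial>\<mu>) = (c::real)"
  using prob_space.prob_space[OF prob_space_axioms] by simp

lemma Phi_slope:
  assumes "p \<le> q"
  shows "min \<alpha> (1-\<alpha>) * (q - p) \<le> Phi p - Phi q" "Phi p - Phi q \<le> max \<alpha> (1-\<alpha>) * (q - p)"
proof -
  have e: "Phi p - Phi q = (\<integral>x. gfun \<alpha> (x - p) - gfun \<alpha> (x - q) \<partial>\<mu>)"
    unfolding Phi_def by (rule Bochner_Integration.integral_diff[OF int_g int_g, symmetric])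
  have "(\<integral>x. min \<alpha> (1-\<alpha>) * (q - p) \<partial>\<mu>) \<le> (\<integral>x. gfun \<alpha> (x - p) - gfun \<alpha> (x - q) \<partial>\<mu>)"
  proof (rule integral_mono)
    fix x show "min \<alpha> (1-\<alpha>) * (q - p) \<le> gfun \<alpha> (x - p) - gfun \<alpha> (x - q)"
      using gfun_slope(1)[OF a0 a1, of "x-q" "x-p"] assms by simp
  qed (use int_g in auto)
  then show "min \<alpha> (1-\<alpha>) * (q - p) \<le> Phi p - Phi q" unfolding e int_mu_const .
  have "(\<integral>x. gfun \<alpha> (x - p) - gfun \<alpha> (x - q) \<partial>\<mu>) \<le> (\<integral>x. max \<alpha> (1-\<alpha>) * (q - p) \<partial>\<mu>)"
  proof (rule integral_mono)
    fix x show "gfun \<alpha> (x - p) - gfun \<alpha> (x - q) \<le> max \<alpha> (1-\<alpha>) * (q - p)"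
      using gfun_slope(2)[OF a0 a1, of "x-q" "x-p"] assms by simp
  qed (use int_g in auto)
  then show "Phi p - Phi q \<le> max \<alpha> (1-\<alpha>) * (q - p)" unfolding e int_mu_const .
qed

lemma Phi_strict: "p < q \<Longrightarrow> Phi q < Phi p"
proof -
  assume "p < q"
  moreover have "0 < min \<alpha> (1-\<alpha>)" using a0 a1 by simp
  ultimately have "0 < min \<alpha> (1-\<alpha>) * (q - p)" by simp
  then show ?thesis using Phi_slope(1)[of p q] \<open>p < q\<close> by simp
qed

lemma Phi_root: "\<exists>y. Phi y = 0"
proof -
  have K0: "AE x in \<mu>. 0 \<le> x + K" "AE x in \<mu>. x - K \<le> 0" using bnd by (auto elim!: eventually_mono)
  have "0 \<le> Phi (-K)" unfolding Phi_def
    by (rule integral_nonneg_AE) (use K0(1) in \<open>auto elim!: eventually_mono intro: gfun_nonneg[OF a0 a1]\<close>)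
  moreover have "Phi K \<le> 0"
  proof -
    have "0 \<le> (\<integral>x. - gfun \<alpha> (x - K) \<partial>\<mu>)"
      by (rule integral_nonneg_AE) (use K0(2) gfun_nonpos[OF a0 a1] in \<open>auto elim!: eventually_mono\<close>)
    then show ?thesis unfolding Phi_def by simp
  qed
  moreover have "-K \<le> K" using \<open>0 \<le> Phi (-K)\<close> \<open>Phi K \<le> 0\<close> Phi_strict[of K "-K"] by linarith
  moreover have "continuous_on {-K..K} Phi"
  proof (rule lipschitz_on_continuous_on[where L="max \<alpha> (1-\<alpha>)"], rule lipschitz_onI)
    fix x y :: real
    show "dist (Phi x) (Phi y) \<le> max \<alpha> (1-\<alpha>) * dist x y"
    proof (cases "x \<le> y")
      case True
      have "0 \<le> min \<alpha> (1-\<alpha>) * (y - x)" using True a0 a1 by simp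
      then have "dist (Phi x) (Phi y) = Phi x - Phi y" using Phi_slope(1)[OF True] by (simp add: dist_real_def)
      moreover have "dist x y = y - x" using True by (simp add: dist_real_def)
      ultimately show ?thesis using Phi_slope(2)[OF True] by simp
    next
      case False
      have "0 \<le> min \<alpha> (1-\<alpha>) * (x - y)" using False a0 a1 by simp
      then have "dist (Phi x) (Phi y) = Phi y - Phi x" using Phi_slope(1)[of y x] False by (simp add: dist_real_def)
      moreover have "dist x y = x - y" using False by (simp add: dist_real_def)
      ultimately show ?thesis using Phi_slope(2)[of y x] False by simp
    qed
  qed (use a0 a1 in auto)
  ultimately show ?thesis using IVT2'[of Phi K 0 "-K"] by auto
qed

lemma loss_eq: "expectile_loss \<alpha> \<mu> z = (\<integral>x. lfun \<alpha> (x - z) \<partial>\<mu>)"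
proof -
  have i1: "integrable \<mu> (\<lambda>x. (negpart (x - z))\<^sup>2)"
  proof (rule int_bnd[where C="(K + \<bar>z\<bar>)\<^sup>2"])
    fix x :: real assume x: "\<bar>x\<bar> \<le> K"
    have "\<bar>(negpart (x - z))\<^sup>2\<bar> = \<bar>negpart (x - z)\<bar>\<^sup>2" by simp
    also have "\<dots> \<le> (K + \<bar>z\<bar>)\<^sup>2" using x by (intro power_mono) (auto simp: negpart_def)
    finally show "\<bar>(negpart (x - z))\<^sup>2\<bar> \<le> (K + \<bar>z\<bar>)\<^sup>2" .
  qed (simp add: negpart_def)
  have i2: "integrable \<mu> (\<lambda>x. (pospart (x - z))\<^sup>2)"
  proof (rule int_bnd[where C="(K + \<bar>z\<bar>)\<^sup>2"])
    fix x :: real assume x: "\<bar>x\<bar> \<le> K"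
    have "\<bar>(pospart (x - z))\<^sup>2\<bar> = \<bar>pospart (x - z)\<bar>\<^sup>2" by simp
    also have "\<dots> \<le> (K + \<bar>z\<bar>)\<^sup>2" using x by (intro power_mono) (auto simp: pospart_def)
    finally show "\<bar>(pospart (x - z))\<^sup>2\<bar> \<le> (K + \<bar>z\<bar>)\<^sup>2" .
  qed (simp add: pospart_def)
  show ?thesis unfolding expectile_loss_def lfun_def
    using i1 i2 by simp
qed

lemma loss_ge:
  assumes "Phi y = 0"
  shows "expectile_loss \<alpha> \<mu> y + min \<alpha> (1-\<alpha>) * (y - z)\<^sup>2 \<le> expectile_loss \<alpha> \<mu> z"
proof -
  have "(\<integral>x. lfun \<alpha> (x - y) + 2 * gfun \<alpha> (x - y) * (y - z) + min \<alpha> (1-\<alpha>) * (y - z)\<^sup>2 \<partial>\<mu>)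
      \<le> (\<integral>x. lfun \<alpha> (x - z) \<partial>\<mu>)"
  proof (rule integral_mono)
    show "integrable \<mu> (\<lambda>x. lfun \<alpha> (x - y) + 2 * gfun \<alpha> (x - y) * (y - z) + min \<alpha> (1-\<alpha>) * (y - z)\<^sup>2)"
      using int_l int_g by (intro Bochner_Integration.integrable_add integrable_mult_left) auto
    show "integrable \<mu> (\<lambda>x. lfun \<alpha> (x - z))" by (rule int_l)
    fix x show "lfun \<alpha> (x - y) + 2 * gfun \<alpha> (x - y) * (y - z) + min \<alpha> (1-\<alpha>) * (y - z)\<^sup>2
       \<le> lfun \<alpha> (x - z)"
      using lfun_ineq[OF a0 a1, of "x - y" "y - z"] by simp
  qed
  moreover have "(\<integral>x. lfun \<alpha> (x - y) + 2 * gfun \<alpha> (x - y) * (y - z) + min \<alpha> (1-\<alpha>) * (y - z)\<^sup>2 \<partial>\<mu>)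
      = (\<integral>x. lfun \<alpha> (x - y) \<partial>\<mu>) + 2 * (y - z) * Phi y + min \<alpha> (1-\<alpha>) * (y - z)\<^sup>2"
  proof -
    have "(\<integral>x. lfun \<alpha> (x - y) + 2 * gfun \<alpha> (x - y) * (y - z) + min \<alpha> (1-\<alpha>) * (y - z)\<^sup>2 \<partial>\<mu>)
      = (\<integral>x. lfun \<alpha> (x - y) + (2 * (y - z)) * gfun \<alpha> (x - y) \<partial>\<mu>) + min \<alpha> (1-\<alpha>) * (y - z)\<^sup>2"
      using int_l int_g prob_space.prob_space[OF prob_space_axioms]
      by (subst Bochner_Integration.integral_add) (auto simp: mult_ac)
    also have "\<dots> = (\<integral>x. lfun \<alpha> (x - y) \<partial>\<mu>) + 2 * (y - z) * Phi y + min \<alpha> (1-\<alpha>) * (y - z)\<^sup>2"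
      using int_l int_g unfolding Phi_def
      by (subst Bochner_Integration.integral_add) (auto simp: mult_ac)
    finally show ?thesis .
  qed
  ultimately show ?thesis using assms by (simp add: loss_eq)
qed

lemma expectile_root: "Phi (expectile \<alpha> \<mu>) = 0"
proof -
  obtain y where y: "Phi y = 0" using Phi_root by blast
  have m0: "0 < min \<alpha> (1-\<alpha>)" using a0 a1 by simp
  have "\<forall>z. expectile_loss \<alpha> \<mu> y \<le> expectile_loss \<alpha> \<mu> z"
  proof
    fix z
    have "0 \<le> min \<alpha> (1-\<alpha>) * (y - z)\<^sup>2" using m0 by simp
    then show "expectile_loss \<alpha> \<mu> y \<le> expectile_loss \<alpha> \<mu> z" using loss_ge[OF y, of z] by linarith
  qed
  moreover have "y1 = y" if "\<forall>z. expectile_loss \<alpha> \<mu> y1 \<le> expectile_loss \<alpha> \<mu> z" for y1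
  proof -
    from that have "expectile_loss \<alpha> \<mu> y1 \<le> expectile_loss \<alpha> \<mu> y" by blast
    with loss_ge[OF y, of y1] have "min \<alpha> (1-\<alpha>) * (y - y1)\<^sup>2 \<le> 0" by simp
    then have "(y - y1)\<^sup>2 \<le> 0" using m0 by (simp add: mult_le_0_iff)
    then show "y1 = y" by simp
  qed
  ultimately have "expectile \<alpha> \<mu> = y" unfolding expectile_def by (rule someI2)
  then show ?thesis using y by simp
qed

end

definition nrm :: "('s::finite \<Rightarrow> 'a::finite \<Rightarrow> real) \<Rightarrow> real" where
  "nrm Q = Max (range (\<lambda>(s, a). \<bar>Q s a\<bar>))"

lemma nrm_ge: "\<bar>Q s a\<bar> \<le> nrm Q"
  unfolding nrm_def by (rule Max_ge) (auto intro!: image_eqI[where x="(s,a)"])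

lemma nrm_le: "(\<And>s a. \<bar>Q s a\<bar> \<le> c) \<Longrightarrow> nrm Q \<le> c"
  unfolding nrm_def by (subst Max_le_iff) auto

lemma nrm_nonneg: "0 \<le> nrm Q"
  using nrm_ge[of Q] abs_ge_zero by (meson order_trans)

lemma nrm_le_sum: "nrm Q \<le> (\<Sum>s\<in>UNIV. \<Sum>a\<in>UNIV. \<bar>Q s a\<bar>)"
proof (rule nrm_le)
  fix s a
  have "\<bar>Q s a\<bar> \<le> (\<Sum>a\<in>UNIV. \<bar>Q s a\<bar>)" by (rule member_le_sum) auto
  also have "\<dots> \<le> (\<Sum>s\<in>UNIV. \<Sum>a\<in>UNIV. \<bar>Q s a\<bar>)"
    by (rule member_le_sum[where f="\<lambda>s. \<Sum>a\<in>UNIV. \<bar>Q s a\<bar>"]) (auto intro: sum_nonneg)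
  finally show "\<bar>Q s a\<bar> \<le> (\<Sum>s\<in>UNIV. \<Sum>a\<in>UNIV. \<bar>Q s a\<bar>)" .
qed

lemma nrm_tendsto:
  assumes "\<And>s a. (\<lambda>n. X n s a) \<longlonglongrightarrow> 0"
  shows "(\<lambda>n. nrm (X n)) \<longlonglongrightarrow> 0"
proof -
  have h1: "(\<lambda>n. \<bar>X n s a\<bar>) \<longlonglongrightarrow> 0" for s a using assms[of s a] by (rule tendsto_rabs_zero)
  have h2: "(\<lambda>n. \<Sum>a\<in>UNIV. \<bar>X n s a\<bar>) \<longlonglongrightarrow> 0" for s
  proof -
    have "(\<lambda>n. \<Sum>a\<in>UNIV. \<bar>X n s a\<bar>) \<longlonglongrightarrow> (\<Sum>a\<in>(UNIV::'b set). 0)"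
      by (rule tendsto_sum) (rule h1)
    then show ?thesis by simp
  qed
  have "(\<lambda>n. \<Sum>s\<in>UNIV. \<Sum>a\<in>UNIV. \<bar>X n s a\<bar>) \<longlonglongrightarrow> (\<Sum>s\<in>(UNIV::'a set). 0)"
    by (rule tendsto_sum) (rule h2)
  then have "(\<lambda>n. \<Sum>s\<in>UNIV. \<Sum>a\<in>UNIV. \<bar>X n s a\<bar>) \<longlonglongrightarrow> 0" by simp
  moreover have "\<forall>\<^sub>F n in sequentially. 0 \<le> nrm (X n)" by (simp add: nrm_nonneg)
  moreover have "\<forall>\<^sub>F n in sequentially. nrm (X n) \<le> (\<Sum>s\<in>UNIV. \<Sum>a\<in>UNIV. \<bar>X n s a\<bar>)"
    by (simp add: nrm_le_sum)
  ultimately show ?thesis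
    using tendsto_sandwich[of "\<lambda>_. 0" "\<lambda>n. nrm (X n)" sequentially] by auto
qed

locale mdp =
  fixes P :: "'s::finite \<Rightarrow> 'a::finite \<Rightarrow> (real \<times> 's) measure"
    and \<pi> :: "'s \<Rightarrow> 'a \<Rightarrow> real"
    and \<alpha> \<gamma> :: real
  assumes gamma: "0 < \<gamma>" "\<gamma> < 1"
    and alpha: "0 < \<alpha>" "\<alpha> < 1"
    and policy: "\<And>s a. 0 \<le> \<pi> s a" "\<And>s. (\<Sum>a\<in>UNIV. \<pi> s a) = 1"
    and P_prob: "\<And>s a. prob_space (P s a)"
    and P_sets: "\<And>s a. sets (P s a) = sets (borel \<Otimes>\<^sub>M count_space UNIV)"
    and reward_range: "\<And>s a. AE x in P s a. 0 \<le> fst x \<and> fst x \<le> 1"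
begin

lemma V_abs: "\<bar>Vpol \<pi> Q s\<bar> \<le> nrm Q"
proof -
  have "\<bar>Vpol \<pi> Q s\<bar> \<le> (\<Sum>a'\<in>UNIV. \<bar>\<pi> s a' * Q s a'\<bar>)"
    unfolding Vpol_def by (rule sum_abs)
  also have "\<dots> \<le> (\<Sum>a'\<in>UNIV. \<pi> s a' * nrm Q)"
    by (rule sum_mono) (simp add: abs_mult policy(1) mult_left_mono nrm_ge)
  also have "\<dots> = nrm Q" using policy(2)[of s] by (simp add: sum_distrib_right[symmetric])
  finally show ?thesis .
qed

lemma V_diff: "Vpol \<pi> Q s - Vpol \<pi> Q' s = Vpol \<pi> (\<lambda>s a. Q s a - Q' s a) s"
  unfolding Vpol_def by (simp add: sum_subtractf right_diff_distrib)

lemma V_lip: "\<bar>Vpol \<pi> Q s - Vpol \<pi> Q' s\<bar> \<le> nrm (\<lambda>s a. Q s a - Q' s a)"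
  unfolding V_diff by (rule V_abs)

definition Yf :: "('s \<Rightarrow> 'a \<Rightarrow> real) \<Rightarrow> real \<times> 's \<Rightarrow> real" where
  "Yf Q = (\<lambda>(r, s'). r + \<gamma> * Vpol \<pi> Q s')"

lemma snd_fun_meas: "(\<lambda>x. f (snd x) :: real) \<in> borel_measurable (borel \<Otimes>\<^sub>M count_space (UNIV :: 's set))"
  by (rule measurable_compose[OF measurable_snd]) simp

lemma Yf_meas[measurable]: "Yf Q \<in> borel_measurable (borel \<Otimes>\<^sub>M count_space UNIV)"
proof -
  have "Yf Q = (\<lambda>x. fst x + \<gamma> * Vpol \<pi> Q (snd x))" unfolding Yf_def by (auto simp: fun_eq_iff)
  moreover have "(\<lambda>x. fst x + \<gamma> * Vpol \<pi> Q (snd x)) \<in> borel_measurable (borel \<Otimes>\<^sub>M count_space UNIV)"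
    using snd_fun_meas[of "\<lambda>s'. Vpol \<pi> Q s'"] by measurable
  ultimately show ?thesis by simp
qed

lemma Yf_measP: "Yf Q \<in> borel_measurable (P s a)"
  using Yf_meas measurable_cong_sets[OF P_sets refl] by blast

definition mu :: "('s \<Rightarrow> 'a \<Rightarrow> real) \<Rightarrow> 's \<Rightarrow> 'a \<Rightarrow> real measure" where
  "mu Q s a = distr (P s a) borel (Yf Q)"

lemma expm_mu: "expm (mu Q s a) (1 + \<gamma> * nrm Q) \<alpha>"
proof -
  interpret p: prob_space "P s a" by (rule P_prob)
  have "prob_space (mu Q s a)" unfolding mu_def by (rule p.prob_space_distr) (rule Yf_measP)
  moreover have "AE x in mu Q s a. \<bar>x\<bar> \<le> 1 + \<gamma> * nrm Q"
    unfolding mu_def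
  proof (subst AE_distr_iff)
    show "AE x in P s a. \<bar>Yf Q x\<bar> \<le> 1 + \<gamma> * nrm Q"
      using reward_range[of s a]
    proof eventually_elim
      case (elim x)
      obtain r s' where x: "x = (r, s')" by force
      have "\<bar>\<gamma> * Vpol \<pi> Q s'\<bar> \<le> \<gamma> * nrm Q"
        using V_abs[of Q s'] gamma by (simp add: abs_mult mult_left_mono)
      moreover have "\<bar>r + \<gamma> * Vpol \<pi> Q s'\<bar> \<le> \<bar>r\<bar> + \<bar>\<gamma> * Vpol \<pi> Q s'\<bar>" by (rule abs_triangle_ineq)
      ultimately show ?case using elim x by (simp add: Yf_def)
    qed
  qed (auto intro: Yf_measP)
  ultimately show ?thesis
    unfolding expm_def expm_axioms_def using alpha by (simp add: mu_def)
qed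

definition hm :: "('s \<Rightarrow> 'a \<Rightarrow> real) \<Rightarrow> 's \<Rightarrow> 'a \<Rightarrow> real \<Rightarrow> real" where
  "hm Q s a q = (\<integral>x. gfun \<alpha> (Yf Q x - q) \<partial>P s a)"

lemma hm_Phi: "hm Q s a q = expm.Phi (mu Q s a) \<alpha> q"
proof -
  interpret e: expm "mu Q s a" "1 + \<gamma> * nrm Q" \<alpha> by (rule expm_mu)
  show ?thesis unfolding hm_def e.Phi_def unfolding mu_def
    by (subst integral_distr) (auto intro: Yf_measP)
qed

definition T :: "('s \<Rightarrow> 'a \<Rightarrow> real) \<Rightarrow> 's \<Rightarrow> 'a \<Rightarrow> real" where
  "T Q = bellman_exp \<alpha> \<gamma> P \<pi> Q"

lemma T_eq: "T Q s a = expectile \<alpha> (mu Q s a)"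
  unfolding T_def bellman_exp_def mu_def Yf_def by simp

lemma hm_root: "hm Q s a (T Q s a) = 0"
proof -
  interpret e: expm "mu Q s a" "1 + \<gamma> * nrm Q" \<alpha> by (rule expm_mu)
  show ?thesis unfolding hm_Phi T_eq by (rule e.expectile_root)
qed

lemma hm_slope:
  assumes "p \<le> q"
  shows "min \<alpha> (1-\<alpha>) * (q - p) \<le> hm Q s a p - hm Q s a q"
    "hm Q s a p - hm Q s a q \<le> max \<alpha> (1-\<alpha>) * (q - p)"
proof -
  interpret e: expm "mu Q s a" "1 + \<gamma> * nrm Q" \<alpha> by (rule expm_mu)
  show "min \<alpha> (1-\<alpha>) * (q - p) \<le> hm Q s a p - hm Q s a q"
    "hm Q s a p - hm Q s a q \<le> max \<alpha> (1-\<alpha>) * (q - p)"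
    unfolding hm_Phi using e.Phi_slope[OF assms] by auto
qed

lemma hm_strict: "p < q \<Longrightarrow> hm Q s a q < hm Q s a p"
proof -
  assume "p < q"
  moreover have "0 < min \<alpha> (1-\<alpha>)" using alpha by simp
  ultimately have "0 < min \<alpha> (1-\<alpha>) * (q - p)" by simp
  then show ?thesis using hm_slope(1)[of p q Q s a] \<open>p < q\<close> by simp
qed

lemma int_gY: "integrable (P s a) (\<lambda>x. gfun \<alpha> (Yf Q x - q))"
proof -
  interpret e: expm "mu Q s a" "1 + \<gamma> * nrm Q" \<alpha> by (rule expm_mu)
  have "integrable (mu Q s a) (\<lambda>x. gfun \<alpha> (x - q))" by (rule e.int_g)
  then show ?thesis unfolding mu_def by (subst (asm) integrable_distr_eq) (auto intro: Yf_measP)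
qed

lemma hm_shift:
  assumes "\<And>s'. Vpol \<pi> Q s' \<le> Vpol \<pi> Q' s' + c"
  shows "hm Q s a q \<le> hm Q' s a (q - \<gamma> * c)"
  unfolding hm_def
proof (rule integral_mono[OF int_gY int_gY])
  fix x :: "real \<times> 's"
  obtain r s' where x: "x = (r, s')" by force
  have "\<gamma> * Vpol \<pi> Q s' \<le> \<gamma> * (Vpol \<pi> Q' s' + c)" using assms gamma by (simp add: mult_left_mono)
  then have "Yf Q x - q \<le> Yf Q' x - (q - \<gamma> * c)" by (simp add: x Yf_def algebra_simps)
  then show "gfun \<alpha> (Yf Q x - q) \<le> gfun \<alpha> (Yf Q' x - (q - \<gamma> * c))"
    by (rule gfun_mono[OF alpha])
qed

lemma T_shift:
  assumes "\<And>s'. Vpol \<pi> Q s' \<le> Vpol \<pi> Q' s' + c"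
  shows "T Q s a \<le> T Q' s a + \<gamma> * c"
proof (rule ccontr)
  assume "\<not> ?thesis"
  then have lt: "T Q' s a + \<gamma> * c < T Q s a" by simp
  have "hm Q s a (T Q' s a + \<gamma> * c) \<le> hm Q' s a (T Q' s a)"
    using hm_shift[OF assms, of s a "T Q' s a + \<gamma> * c"] by simp
  also have "\<dots> = 0" by (rule hm_root)
  also have "0 = hm Q s a (T Q s a)" by (rule hm_root[symmetric])
  finally show False using hm_strict[OF lt, of Q s a] by simp
qed

lemma T_lip: "\<bar>T Q s a - T Q' s a\<bar> \<le> \<gamma> * nrm (\<lambda>s a. Q s a - Q' s a)"
proof -
  have "T Q s a \<le> T Q' s a + \<gamma> * nrm (\<lambda>s a. Q s a - Q' s a)"
  proof (rule T_shift)
    fix s' show "Vpol \<pi> Q s' \<le> Vpol \<pi> Q' s' + nrm (\<lambda>s a. Q s a - Q' s a)"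
      using V_lip[of Q s' Q'] by (simp add: abs_le_iff)
  qed
  moreover have "T Q' s a \<le> T Q s a + \<gamma> * nrm (\<lambda>s a. Q' s a - Q s a)"
  proof (rule T_shift)
    fix s' show "Vpol \<pi> Q' s' \<le> Vpol \<pi> Q s' + nrm (\<lambda>s a. Q' s a - Q s a)"
      using V_lip[of Q' s' Q] by (simp add: abs_le_iff)
  qed
  moreover have "nrm (\<lambda>s a. Q' s a - Q s a) = nrm (\<lambda>s a. Q s a - Q' s a)"
    unfolding nrm_def by (simp add: abs_minus_commute)
  ultimately show ?thesis by (simp add: abs_le_iff)
qed

end

context mdp begin

lemma T_fix_unique:
  assumes "T Q = Q" "T Q' = Q'"
  shows "Q = Q'"
proof -
  have "nrm (\<lambda>s a. Q s a - Q' s a) \<le> \<gamma> * nrm (\<lambda>s a. Q s a - Q' s a)"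
  proof (rule nrm_le)
    fix s a show "\<bar>Q s a - Q' s a\<bar> \<le> \<gamma> * nrm (\<lambda>s a. Q s a - Q' s a)"
      using T_lip[of Q s a Q'] assms by simp
  qed
  then have "(1 - \<gamma>) * nrm (\<lambda>s a. Q s a - Q' s a) \<le> 0" by (simp add: algebra_simps)
  then have "nrm (\<lambda>s a. Q s a - Q' s a) \<le> 0" using gamma by (simp add: mult_le_0_iff)
  then have "\<bar>Q s a - Q' s a\<bar> \<le> 0" for s a using nrm_ge[of "\<lambda>s a. Q s a - Q' s a" s a] by linarith
  then show ?thesis by (auto simp: fun_eq_iff)
qed

lemma T_fix_exists: "\<exists>Q. T Q = Q"
proof -
  define x where "x n = (T ^^ n) (\<lambda>_ _. 0)" for n
  have xS: "x (Suc n) = T (x n)" for n by (simp add: x_def)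
  define d0 where "d0 = nrm (\<lambda>s a. x 1 s a - x 0 s a)"
  have step: "nrm (\<lambda>s a. x (Suc n) s a - x n s a) \<le> \<gamma> ^ n * d0" for n
  proof (induction n)
    case 0 then show ?case by (simp add: d0_def)
  next
    case (Suc n)
    have "nrm (\<lambda>s a. x (Suc (Suc n)) s a - x (Suc n) s a) \<le> \<gamma> * nrm (\<lambda>s a. x (Suc n) s a - x n s a)"
    proof (rule nrm_le)
      fix s a show "\<bar>x (Suc (Suc n)) s a - x (Suc n) s a\<bar> \<le> \<gamma> * nrm (\<lambda>s a. x (Suc n) s a - x n s a)"
        unfolding xS[of "Suc n"] xS[of n] by (rule T_lip)
    qed
    also have "\<dots> \<le> \<gamma> * (\<gamma> ^ n * d0)" using Suc gamma by (simp add: mult_left_mono)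
    finally show ?case by simp
  qed
  have summ: "summable (\<lambda>n. x (Suc n) s a - x n s a)" for s a
  proof (rule summable_comparison_test)
    show "\<exists>N. \<forall>n\<ge>N. norm (x (Suc n) s a - x n s a) \<le> \<gamma> ^ n * d0"
      using step nrm_ge order_trans by (simp add: real_norm_def) blast
    show "summable (\<lambda>n. \<gamma> ^ n * d0)" using gamma by (intro summable_mult2 summable_geometric) simp
  qed
  define L where "L s a = x 0 s a + (\<Sum>n. x (Suc n) s a - x n s a)" for s a
  have conv: "(\<lambda>n. x n s a) \<longlonglongrightarrow> L s a" for s a
  proof -
    have "(\<lambda>n. \<Sum>i<n. x (Suc i) s a - x i s a) \<longlonglongrightarrow> (\<Sum>n. x (Suc n) s a - x n s a)"
      by (rule summable_LIMSEQ[OF summ])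
    then have "(\<lambda>n. x 0 s a + (\<Sum>i<n. x (Suc i) s a - x i s a)) \<longlonglongrightarrow> L s a"
      unfolding L_def by (intro tendsto_add tendsto_const)
    moreover have "x 0 s a + (\<Sum>i<n. x (Suc i) s a - x i s a) = x n s a" for n
      using sum_lessThan_telescope[of "\<lambda>i. x i s a" n] by simp
    ultimately show ?thesis by simp
  qed
  have nt: "(\<lambda>n. nrm (\<lambda>s a. L s a - x n s a)) \<longlonglongrightarrow> 0"
  proof (rule nrm_tendsto)
    fix s a
    have "(\<lambda>n. L s a - x n s a) \<longlonglongrightarrow> L s a - L s a" by (intro tendsto_diff tendsto_const conv)
    then show "(\<lambda>n. L s a - x n s a) \<longlonglongrightarrow> 0" by simp
  qed
  have "T L s a = L s a" for s a
  proof -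
    have "(\<lambda>n. T L s a - x (Suc n) s a) \<longlonglongrightarrow> 0"
    proof (rule Lim_null_comparison)
      have "(\<lambda>n. \<gamma> * nrm (\<lambda>s a. L s a - x n s a)) \<longlonglongrightarrow> \<gamma> * 0"
        by (intro tendsto_mult tendsto_const nt)
      then show "(\<lambda>n. \<gamma> * nrm (\<lambda>s a. L s a - x n s a)) \<longlonglongrightarrow> 0" by simp
      show "\<forall>\<^sub>F n in sequentially. norm (T L s a - x (Suc n) s a) \<le> \<gamma> * nrm (\<lambda>s a. L s a - x n s a)"
        unfolding xS by (simp add: T_lip)
    qed
    then have "(\<lambda>n. T L s a - (T L s a - x (Suc n) s a)) \<longlonglongrightarrow> T L s a - 0"
      by (intro tendsto_diff tendsto_const)
    then have "(\<lambda>n. x (Suc n) s a) \<longlonglongrightarrow> T L s a" by simp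
    moreover have "(\<lambda>n. x (Suc n) s a) \<longlonglongrightarrow> L s a" using conv by (rule LIMSEQ_Suc)
    ultimately show ?thesis by (rule LIMSEQ_unique)
  qed
  then show ?thesis by (auto simp: fun_eq_iff)
qed

lemma Qpi_fix: "T (Qpi \<alpha> \<gamma> P \<pi>) = Qpi \<alpha> \<gamma> P \<pi>"
proof -
  have "\<exists>!Q. bellman_exp \<alpha> \<gamma> P \<pi> Q = Q"
    using T_fix_exists T_fix_unique unfolding T_def by blast
  then show ?thesis unfolding Qpi_def T_def by (rule theI')
qed

end

lemma oneD_upper:
  fixes x c H \<zeta> e :: "nat \<Rightarrow> real" and b \<delta> m M :: real
  assumes e0: "e \<longlonglongrightarrow> 0" and z0: "\<zeta> \<longlonglongrightarrow> 0" and znn: "\<And>t. 0 \<le> \<zeta> t"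
    and div: "\<not> summable \<zeta>"
    and rec: "\<And>t. x (Suc t) + e (Suc t) = x t + e t + 2 * \<zeta> t * H t"
    and d0: "0 < \<delta>" and m0: "0 < m" and M0: "0 < M"
    and H1: "\<And>t. c t \<le> x t \<Longrightarrow> H t \<le> 0"
    and H2: "\<And>t. x t \<le> c t \<Longrightarrow> H t \<le> M * (c t - x t)"
    and H3: "\<And>t. c t + \<delta> \<le> x t \<Longrightarrow> H t \<le> - (m * \<delta>)"
    and cb: "eventually (\<lambda>t. c t \<le> b) sequentially"
  shows "eventually (\<lambda>t. x t \<le> b + 3 * \<delta>) sequentially"
proof -
  have ev1: "eventually (\<lambda>t. \<bar>e t\<bar> \<le> \<delta>) sequentially"
  proof -
    have "\<forall>\<^sub>F t in sequentially. \<bar>e t\<bar> < \<delta>"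
      using e0 d0 unfolding tendsto_iff dist_real_def by auto
    then show ?thesis by (auto elim: eventually_mono)
  qed
  have ev2: "eventually (\<lambda>t. \<bar>\<zeta> t\<bar> \<le> 1 / (2 * M)) sequentially"
  proof -
    have "\<forall>\<^sub>F t in sequentially. \<bar>\<zeta> t\<bar> < 1 / (2 * M)"
      using z0 M0 unfolding tendsto_iff dist_real_def by auto
    then show ?thesis by (auto elim: eventually_mono)
  qed
  have "eventually (\<lambda>t. \<bar>e t\<bar> \<le> \<delta> \<and> \<bar>\<zeta> t\<bar> \<le> 1 / (2 * M) \<and> c t \<le> b) sequentially"
    using ev1 ev2 cb by eventually_elim auto
  then obtain T1 where T1: "\<And>t. t \<ge> T1 \<Longrightarrow> \<bar>e t\<bar> \<le> \<delta> \<and> \<bar>\<zeta> t\<bar> \<le> 1 / (2 * M) \<and> c t \<le> b"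
    unfolding eventually_sequentially by blast
  define z where "z t = x t + e t" for t
  have zS: "z (Suc t) = z t + 2 * \<zeta> t * H t" for t using rec[of t] by (simp add: z_def)
  have A: "z (Suc t) \<le> b + 2 * \<delta>" if t: "t \<ge> T1" and zt: "z t \<le> b + 2 * \<delta>" for t
  proof (cases "c t \<le> x t")
    case True
    then have "2 * \<zeta> t * H t \<le> 0" using H1 znn by (simp add: mult_nonneg_nonpos)
    then show ?thesis using zS[of t] zt by linarith
  next
    case False
    have zM: "2 * \<zeta> t * M \<le> 1" using T1[OF t] znn[of t] M0 by (simp add: field_simps)
    have "2 * \<zeta> t * H t \<le> 2 * \<zeta> t * (M * (c t - x t))"
      using H2[of t] False znn[of t] by (intro mult_left_mono) auto
    also have "\<dots> = (2 * \<zeta> t * M) * (c t - x t)" by simp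
    also have "\<dots> \<le> 1 * (c t - x t)" using zM False by (intro mult_right_mono) auto
    finally have "2 * \<zeta> t * H t \<le> c t - x t" by simp
    then show ?thesis using zS[of t] T1[OF t] d0 unfolding z_def by linarith
  qed
  have B: "z (Suc t) \<le> z t - 2 * m * \<delta> * \<zeta> t" if t: "t \<ge> T1" and zt: "z t > b + 2 * \<delta>" for t
  proof -
    have "c t + \<delta> \<le> x t" using T1[OF t] zt unfolding z_def by linarith
    then have "H t \<le> - (m * \<delta>)" by (rule H3)
    then have "2 * \<zeta> t * H t \<le> 2 * \<zeta> t * (- (m * \<delta>))" using znn[of t] by (intro mult_left_mono) auto
    then show ?thesis using zS[of t] by (simp add: algebra_simps)
  qed
  have C: "\<exists>t2\<ge>T1. z t2 \<le> b + 2 * \<delta>"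
  proof (rule ccontr)
    assume "\<not> ?thesis"
    then have above: "\<And>t. t \<ge> T1 \<Longrightarrow> z t > b + 2 * \<delta>" by force
    have ind: "z (T1 + k) \<le> z T1 - 2 * m * \<delta> * (\<Sum>j<k. \<zeta> (j + T1))" for k
    proof (induction k)
      case 0 then show ?case by simp
    next
      case (Suc k)
      have "z (T1 + Suc k) \<le> z (T1 + k) - 2 * m * \<delta> * \<zeta> (T1 + k)"
        using B[of "T1 + k"] above[of "T1 + k"] by simp
      then show ?case using Suc by (simp add: algebra_simps)
    qed
    have pos: "0 < 2 * m * \<delta>" using m0 d0 by simp
    have "summable (\<lambda>j. \<zeta> (j + T1))"
    proof (rule summableI_nonneg_bounded)
      show "0 \<le> \<zeta> (j + T1)" for j by (rule znn)
      fix k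
      have "z (T1 + k) > b + 2 * \<delta>" by (rule above) simp
      then have "2 * m * \<delta> * (\<Sum>j<k. \<zeta> (j + T1)) \<le> z T1 - (b + 2 * \<delta>)" using ind[of k] by linarith
      then show "(\<Sum>j<k. \<zeta> (j + T1)) \<le> (z T1 - (b + 2 * \<delta>)) / (2 * m * \<delta>)"
        using pos by (simp add: field_simps)
    qed
    then have "summable \<zeta>" by (subst (asm) summable_iff_shift)
    then show False using div by simp
  qed
  then obtain t2 where t2: "t2 \<ge> T1" "z t2 \<le> b + 2 * \<delta>" by blast
  have D: "z t \<le> b + 2 * \<delta>" if "t \<ge> t2" for t
    using that
  proof (induction t rule: dec_induct)
    case base then show ?case by (rule t2(2))
  next
    case (step n) then show ?case using A[of n] t2(1) by simp
  qed
  show ?thesis unfolding eventually_sequentially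
  proof (intro exI allI impI)
    fix t assume "t \<ge> t2"
    moreover from this have "t \<ge> T1" using t2(1) by simp
    ultimately show "x t \<le> b + 3 * \<delta>" using D[of t] T1[of t] unfolding z_def by (simp add: abs_le_iff)
  qed
qed

lemma oneD_lower:
  fixes x c H \<zeta> e :: "nat \<Rightarrow> real" and b \<delta> m M :: real
  assumes e0: "e \<longlonglongrightarrow> 0" and z0: "\<zeta> \<longlonglongrightarrow> 0" and znn: "\<And>t. 0 \<le> \<zeta> t"
    and div: "\<not> summable \<zeta>"
    and rec: "\<And>t. x (Suc t) + e (Suc t) = x t + e t + 2 * \<zeta> t * H t"
    and d0: "0 < \<delta>" and m0: "0 < m" and M0: "0 < M"
    and H1: "\<And>t. x t \<le> c t \<Longrightarrow> 0 \<le> H t"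
    and H2: "\<And>t. c t \<le> x t \<Longrightarrow> - (M * (x t - c t)) \<le> H t"
    and H3: "\<And>t. x t + \<delta> \<le> c t \<Longrightarrow> m * \<delta> \<le> H t"
    and cb: "eventually (\<lambda>t. b \<le> c t) sequentially"
  shows "eventually (\<lambda>t. b - 3 * \<delta> \<le> x t) sequentially"
proof -
  have "eventually (\<lambda>t. - x t \<le> - b + 3 * \<delta>) sequentially"
  proof (rule oneD_upper[where c="\<lambda>t. - c t" and H="\<lambda>t. - H t" and \<zeta>=\<zeta> and e="\<lambda>t. - e t" and m=m and M=M])
    show "(\<lambda>t. - e t) \<longlonglongrightarrow> 0" using tendsto_minus[OF e0] by simp
    show "\<And>t. - x (Suc t) + - e (Suc t) = - x t + - e t + 2 * \<zeta> t * - H t"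
      using rec by (simp add: algebra_simps)
    show "\<And>t. - c t \<le> - x t \<Longrightarrow> - H t \<le> 0" using H1 by force
    show "\<And>t. - x t \<le> - c t \<Longrightarrow> - H t \<le> M * (- c t - - x t)" using H2 by force
    show "\<And>t. - c t + \<delta> \<le> - x t \<Longrightarrow> - H t \<le> - (m * \<delta>)" using H3 by force
    show "\<forall>\<^sub>F t in sequentially. - c t \<le> - b" using cb by (auto elim: eventually_mono)
  qed (use assms in auto)
  then show ?thesis by (auto elim: eventually_mono)
qed

context mdp begin

lemma hm_H1: "T Q s a \<le> q \<Longrightarrow> hm Q s a q \<le> 0"
  using hm_slope(1)[of "T Q s a" q Q s a] hm_root[of Q s a] alpha
  by (smt (verit) mult_nonneg_nonneg)

lemma hm_H2: "q \<le> T Q s a \<Longrightarrow> hm Q s a q \<le> max \<alpha> (1-\<alpha>) * (T Q s a - q)"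
  using hm_slope(2)[of q "T Q s a" Q s a] hm_root[of Q s a] by simp

lemma hm_H3: "T Q s a + \<delta> \<le> q \<Longrightarrow> 0 \<le> \<delta> \<Longrightarrow> hm Q s a q \<le> - (min \<alpha> (1-\<alpha>) * \<delta>)"
proof -
  assume h: "T Q s a + \<delta> \<le> q" "0 \<le> \<delta>"
  have "min \<alpha> (1-\<alpha>) * \<delta> \<le> min \<alpha> (1-\<alpha>) * (q - T Q s a)"
    using h alpha by (intro mult_left_mono) auto
  then show ?thesis using hm_slope(1)[of "T Q s a" q Q s a] hm_root[of Q s a] h by simp
qed

lemma hm_L1: "q \<le> T Q s a \<Longrightarrow> 0 \<le> hm Q s a q"
  using hm_slope(1)[of q "T Q s a" Q s a] hm_root[of Q s a] alpha
  by (smt (verit) mult_nonneg_nonneg)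

lemma hm_L2: "T Q s a \<le> q \<Longrightarrow> - (max \<alpha> (1-\<alpha>) * (q - T Q s a)) \<le> hm Q s a q"
  using hm_slope(2)[of "T Q s a" q Q s a] hm_root[of Q s a] by simp

lemma hm_L3: "q + \<delta> \<le> T Q s a \<Longrightarrow> 0 \<le> \<delta> \<Longrightarrow> min \<alpha> (1-\<alpha>) * \<delta> \<le> hm Q s a q"
proof -
  assume h: "q + \<delta> \<le> T Q s a" "0 \<le> \<delta>"
  have "min \<alpha> (1-\<alpha>) * \<delta> \<le> min \<alpha> (1-\<alpha>) * (T Q s a - q)"
    using h alpha by (intro mult_left_mono) auto
  then show ?thesis using hm_slope(1)[of q "T Q s a" Q s a] hm_root[of Q s a] h by simp
qed

lemma det_step:
  fixes q \<zeta> w :: "nat \<Rightarrow> 's \<Rightarrow> 'a \<Rightarrow> real" and Qs :: "'s \<Rightarrow> 'a \<Rightarrow> real"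
  assumes fx: "T Qs = Qs"
    and rec: "\<And>t s a. q (Suc t) s a = q t s a + 2 * \<zeta> t s a * (hm (q t) s a (q t s a) + w t s a)"
    and znn: "\<And>t s a. 0 \<le> \<zeta> t s a"
    and z0: "\<And>s a. (\<lambda>t. \<zeta> t s a) \<longlonglongrightarrow> 0"
    and div: "\<And>s a. \<not> summable (\<lambda>t. \<zeta> t s a)"
    and sw: "\<And>s a. summable (\<lambda>t. \<zeta> t s a * w t s a)"
    and evD: "eventually (\<lambda>t. nrm (\<lambda>s a. q t s a - Qs s a) \<le> D) sequentially"
    and d0: "0 < \<delta>"
  shows "eventually (\<lambda>t. nrm (\<lambda>s a. q t s a - Qs s a) \<le> \<gamma> * D + 3 * \<delta>) sequentially"
proof -
  have m0: "0 < min \<alpha> (1-\<alpha>)" and M0: "0 < max \<alpha> (1-\<alpha>)" using alpha by auto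
  have comp: "eventually (\<lambda>t. \<bar>q t s a - Qs s a\<bar> \<le> \<gamma> * D + 3 * \<delta>) sequentially" for s a
  proof -
    define S where "S = (\<Sum>t. \<zeta> t s a * w t s a)"
    define e where "e t = 2 * S - 2 * (\<Sum>u<t. \<zeta> u s a * w u s a)" for t
    have e0: "e \<longlonglongrightarrow> 0"
    proof -
      have "(\<lambda>t. 2 * S - 2 * (\<Sum>u<t. \<zeta> u s a * w u s a)) \<longlonglongrightarrow> 2 * S - 2 * S"
        unfolding S_def by (intro tendsto_diff tendsto_mult tendsto_const summable_LIMSEQ sw)
      then show ?thesis unfolding e_def by simp
    qed
    have recx: "q (Suc t) s a + e (Suc t) = q t s a + e t + 2 * \<zeta> t s a * hm (q t) s a (q t s a)" for t
      using rec[of t s a] unfolding e_def by (simp add: algebra_simps)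
    have cb1: "eventually (\<lambda>t. T (q t) s a \<le> Qs s a + \<gamma> * D) sequentially"
      using evD
    proof eventually_elim
      case (elim t)
      have "\<bar>T (q t) s a - T Qs s a\<bar> \<le> \<gamma> * nrm (\<lambda>s a. q t s a - Qs s a)" by (rule T_lip)
      also have "\<dots> \<le> \<gamma> * D" using elim gamma by (intro mult_left_mono) auto
      finally show ?case using fx by (simp add: abs_le_iff)
    qed
    have cb2: "eventually (\<lambda>t. Qs s a - \<gamma> * D \<le> T (q t) s a) sequentially"
      using evD
    proof eventually_elim
      case (elim t)
      have "\<bar>T (q t) s a - T Qs s a\<bar> \<le> \<gamma> * nrm (\<lambda>s a. q t s a - Qs s a)" by (rule T_lip)
      also have "\<dots> \<le> \<gamma> * D" using elim gamma by (intro mult_left_mono) auto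
      finally show ?case using fx by (simp add: abs_le_iff)
    qed
    have up: "eventually (\<lambda>t. q t s a \<le> (Qs s a + \<gamma> * D) + 3 * \<delta>) sequentially"
    proof (rule oneD_upper[where c="\<lambda>t. T (q t) s a" and H="\<lambda>t. hm (q t) s a (q t s a)"
          and \<zeta>="\<lambda>t. \<zeta> t s a" and e=e and m="min \<alpha> (1-\<alpha>)" and M="max \<alpha> (1-\<alpha>)"])
      show "\<And>t. q (Suc t) s a + e (Suc t) = q t s a + e t + 2 * \<zeta> t s a * hm (q t) s a (q t s a)"
        by (rule recx)
      show "\<And>t. T (q t) s a + \<delta> \<le> q t s a \<Longrightarrow> hm (q t) s a (q t s a) \<le> - (min \<alpha> (1 - \<alpha>) * \<delta>)"
        using hm_H3 d0 by simp
    qed (use e0 z0 znn div d0 m0 M0 hm_H1 hm_H2 cb1 in auto)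
    have lo: "eventually (\<lambda>t. (Qs s a - \<gamma> * D) - 3 * \<delta> \<le> q t s a) sequentially"
    proof (rule oneD_lower[where c="\<lambda>t. T (q t) s a" and H="\<lambda>t. hm (q t) s a (q t s a)"
          and \<zeta>="\<lambda>t. \<zeta> t s a" and e=e and m="min \<alpha> (1-\<alpha>)" and M="max \<alpha> (1-\<alpha>)"])
      show "\<And>t. q (Suc t) s a + e (Suc t) = q t s a + e t + 2 * \<zeta> t s a * hm (q t) s a (q t s a)"
        by (rule recx)
      show "\<And>t. q t s a + \<delta> \<le> T (q t) s a \<Longrightarrow> min \<alpha> (1 - \<alpha>) * \<delta> \<le> hm (q t) s a (q t s a)"
        using hm_L3 d0 by simp
    qed (use e0 z0 znn div d0 m0 M0 hm_L1 hm_L2 cb2 in auto)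
    show ?thesis using up lo by eventually_elim (simp add: abs_le_iff)
  qed
  have "eventually (\<lambda>t. \<forall>s. \<forall>a. \<bar>q t s a - Qs s a\<bar> \<le> \<gamma> * D + 3 * \<delta>) sequentially"
    using comp by (intro eventually_all_finite) simp
  then show ?thesis by eventually_elim (rule nrm_le, blast)
qed

lemma det_conv:
  fixes q \<zeta> w :: "nat \<Rightarrow> 's \<Rightarrow> 'a \<Rightarrow> real" and Qs :: "'s \<Rightarrow> 'a \<Rightarrow> real"
  assumes fx: "T Qs = Qs"
    and bnd: "\<And>t. nrm (q t) \<le> B"
    and rec: "\<And>t s a. q (Suc t) s a = q t s a + 2 * \<zeta> t s a * (hm (q t) s a (q t s a) + w t s a)"
    and znn: "\<And>t s a. 0 \<le> \<zeta> t s a"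
    and z0: "\<And>s a. (\<lambda>t. \<zeta> t s a) \<longlonglongrightarrow> 0"
    and div: "\<And>s a. \<not> summable (\<lambda>t. \<zeta> t s a)"
    and sw: "\<And>s a. summable (\<lambda>t. \<zeta> t s a * w t s a)"
  shows "(\<lambda>t. q t s a) \<longlonglongrightarrow> Qs s a"
proof -
  define D0 where "D0 = B + nrm Qs"
  have D0: "nrm (\<lambda>s a. q t s a - Qs s a) \<le> D0" for t
  proof (rule nrm_le)
    fix s a
    have "\<bar>q t s a - Qs s a\<bar> \<le> \<bar>q t s a\<bar> + \<bar>Qs s a\<bar>" by (rule abs_triangle_ineq4)
    also have "\<dots> \<le> B + nrm Qs" using nrm_ge[of "q t" s a] nrm_ge[of Qs s a] bnd[of t] by linarith
    finally show "\<bar>q t s a - Qs s a\<bar> \<le> D0" unfolding D0_def .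
  qed
  have D0nn: "0 \<le> D0" using D0[of 0] nrm_nonneg by (meson order_trans)
  have iter: "eventually (\<lambda>t. nrm (\<lambda>s a. q t s a - Qs s a) \<le> \<gamma> ^ k * D0 + 3 * \<delta> * (\<Sum>j<k. \<gamma> ^ j)) sequentially"
    if d0: "0 < \<delta>" for k \<delta>
  proof (induction k)
    case 0 then show ?case using D0 by simp
  next
    case (Suc k)
    have "eventually (\<lambda>t. nrm (\<lambda>s a. q t s a - Qs s a) \<le> \<gamma> * (\<gamma> ^ k * D0 + 3 * \<delta> * (\<Sum>j<k. \<gamma> ^ j)) + 3 * \<delta>) sequentially"
      by (rule det_step[OF fx rec znn z0 div sw Suc d0])
    moreover have "\<gamma> * (\<gamma> ^ k * D0 + 3 * \<delta> * (\<Sum>j<k. \<gamma> ^ j)) + 3 * \<delta>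
        = \<gamma> ^ Suc k * D0 + 3 * \<delta> * (\<Sum>j<Suc k. \<gamma> ^ j)"
    proof -
      have "(\<Sum>j<Suc k. \<gamma> ^ j) = 1 + \<gamma> * (\<Sum>j<k. \<gamma> ^ j)"
        by (simp add: sum.lessThan_Suc_shift sum_distrib_left del: sum.lessThan_Suc)
      then show ?thesis by (simp add: algebra_simps)
    qed
    ultimately show ?case by simp
  qed
  show ?thesis
  proof (rule LIMSEQ_I)
    fix r :: real assume r: "0 < r"
    define \<delta> where "\<delta> = r * (1 - \<gamma>) / 12"
    have d0: "0 < \<delta>" using r gamma by (simp add: \<delta>_def)
    have "(\<lambda>k. D0 * \<gamma> ^ k) \<longlonglongrightarrow> 0"
      using gamma by (intro tendsto_mult_right_zero LIMSEQ_power_zero) simp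
    then have "eventually (\<lambda>k. D0 * \<gamma> ^ k < r / 4) sequentially"
      using r by (auto simp: tendsto_iff dist_real_def elim!: allE[of _ "r/4"] eventually_mono)
    then obtain k where k: "D0 * \<gamma> ^ k < r / 4" by (auto simp: eventually_sequentially)
    have gs: "(\<Sum>j<k. \<gamma> ^ j) \<le> 1 / (1 - \<gamma>)"
    proof -
      have "(\<Sum>j<k. \<gamma> ^ j) = (1 - \<gamma> ^ k) / (1 - \<gamma>)" using gamma by (simp add: sum_gp_strict)
      also have "\<dots> \<le> 1 / (1 - \<gamma>)" using gamma by (intro divide_right_mono) auto
      finally show ?thesis .
    qed
    have "3 * \<delta> * (\<Sum>j<k. \<gamma> ^ j) \<le> 3 * \<delta> * (1 / (1 - \<gamma>))"
      using gs d0 by (intro mult_left_mono) auto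
    also have "\<dots> = r / 4" using gamma by (simp add: \<delta>_def field_simps)
    finally have b2: "3 * \<delta> * (\<Sum>j<k. \<gamma> ^ j) \<le> r / 4" .
    from iter[OF d0, of k] obtain N where N: "\<And>t. t \<ge> N \<Longrightarrow>
        nrm (\<lambda>s a. q t s a - Qs s a) \<le> \<gamma> ^ k * D0 + 3 * \<delta> * (\<Sum>j<k. \<gamma> ^ j)"
      by (auto simp: eventually_sequentially)
    show "\<exists>no. \<forall>n\<ge>no. norm (q n s a - Qs s a) < r"
    proof (intro exI allI impI)
      fix n assume "n \<ge> N"
      then have "\<bar>q n s a - Qs s a\<bar> \<le> \<gamma> ^ k * D0 + 3 * \<delta> * (\<Sum>j<k. \<gamma> ^ j)"
        using N[of n] nrm_ge[of "\<lambda>s a. q n s a - Qs s a" s a] by simp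
      then show "norm (q n s a - Qs s a) < r" using k b2 r by (simp add: mult.commute)
    qed
  qed
qed

end

lemma first_hit:
  fixes y :: "nat \<Rightarrow> real" and \<epsilon> :: real
  assumes eps: "0 < \<epsilon>" and nN: "n \<le> N"
  defines "I \<equiv> \<lambda>k. if \<epsilon> \<le> \<bar>y k\<bar> \<and> (\<forall>j\<in>{n..<k}. \<bar>y j\<bar> < \<epsilon>) then 1 else (0::real)"
  shows "(\<Sum>k\<in>{n..N}. I k) = (if \<exists>k\<in>{n..N}. \<epsilon> \<le> \<bar>y k\<bar> then 1 else 0)"
    and "\<epsilon>\<^sup>2 * (\<Sum>k\<in>{n..N}. I k) + 2 * (\<Sum>k\<in>{n..N}. I k * y k * (y N - y k)) \<le> (y N)\<^sup>2"
proof -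
  have "(\<Sum>k\<in>{n..N}. I k) = (if \<exists>k\<in>{n..N}. \<epsilon> \<le> \<bar>y k\<bar> then 1 else 0)
     \<and> \<epsilon>\<^sup>2 * (\<Sum>k\<in>{n..N}. I k) + 2 * (\<Sum>k\<in>{n..N}. I k * y k * (y N - y k)) \<le> (y N)\<^sup>2"
  proof (cases "\<exists>k\<in>{n..N}. \<epsilon> \<le> \<bar>y k\<bar>")
    case False
    then have "I k = 0" if "k \<in> {n..N}" for k using that unfolding I_def by auto
    then show ?thesis using False by simp
  next
    case True
    define P where "P k \<longleftrightarrow> k \<in> {n..N} \<and> \<epsilon> \<le> \<bar>y k\<bar>" for k
    define k0 where "k0 = (LEAST k. P k)"
    have Pk0: "P k0" unfolding k0_def by (rule LeastI_ex) (use True P_def in auto)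
    have Ik: "I k = (if k = k0 then 1 else 0)" if k: "k \<in> {n..N}" for k
    proof (cases "k = k0")
      case True
      have "\<bar>y j\<bar> < \<epsilon>" if j: "j \<in> {n..<k0}" for j
      proof -
        have "\<not> P j" unfolding k0_def by (rule not_less_Least) (use j k0_def in auto)
        then show ?thesis using j Pk0 unfolding P_def by auto
      qed
      then show ?thesis using True Pk0 unfolding I_def P_def by auto
    next
      case False
      have "\<not> (\<epsilon> \<le> \<bar>y k\<bar> \<and> (\<forall>j\<in>{n..<k}. \<bar>y j\<bar> < \<epsilon>))"
      proof
        assume h: "\<epsilon> \<le> \<bar>y k\<bar> \<and> (\<forall>j\<in>{n..<k}. \<bar>y j\<bar> < \<epsilon>)"
        then have "P k" using k P_def by auto
        then have "k0 \<le> k" unfolding k0_def by (rule Least_le)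
        then have "k0 \<in> {n..<k}" using False Pk0 P_def by auto
        then have "\<bar>y k0\<bar> < \<epsilon>" using h by blast
        then show False using Pk0 P_def by auto
      qed
      then show ?thesis using False unfolding I_def by auto
    qed
    have s1: "(\<Sum>k\<in>{n..N}. I k) = 1"
    proof -
      have "(\<Sum>k\<in>{n..N}. I k) = (\<Sum>k\<in>{n..N}. if k = k0 then 1 else 0)"
        by (rule sum.cong) (auto simp: Ik)
      also have "\<dots> = 1" using Pk0 P_def by (simp add: sum.delta)
      finally show ?thesis .
    qed
    have s2: "(\<Sum>k\<in>{n..N}. I k * y k * (y N - y k)) = y k0 * (y N - y k0)"
    proof -
      have "(\<Sum>k\<in>{n..N}. I k * y k * (y N - y k)) = (\<Sum>k\<in>{n..N}. if k = k0 then y k * (y N - y k) else 0)"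
        by (rule sum.cong) (auto simp: Ik)
      also have "\<dots> = y k0 * (y N - y k0)" using Pk0 P_def by (simp add: sum.delta)
      finally show ?thesis .
    qed
    have "\<epsilon>\<^sup>2 \<le> (y k0)\<^sup>2"
    proof -
      have "\<epsilon> \<le> \<bar>y k0\<bar>" using Pk0 P_def by auto
      then have "\<epsilon>\<^sup>2 \<le> \<bar>y k0\<bar>\<^sup>2" using eps by (intro power_mono) auto
      then show ?thesis by simp
    qed
    moreover have "(y k0)\<^sup>2 + 2 * (y k0 * (y N - y k0)) \<le> (y N)\<^sup>2"
    proof -
      have "(y N)\<^sup>2 - ((y k0)\<^sup>2 + 2 * (y k0 * (y N - y k0))) = (y N - y k0)\<^sup>2"
        by (simp add: power2_eq_square algebra_simps)
      then show ?thesis by (metis diff_ge_0_iff_ge zero_le_power2)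
    qed
    ultimately show ?thesis using True s1 s2 by simp
  qed
  then show "(\<Sum>k\<in>{n..N}. I k) = (if \<exists>k\<in>{n..N}. \<epsilon> \<le> \<bar>y k\<bar> then 1 else 0)"
    and "\<epsilon>\<^sup>2 * (\<Sum>k\<in>{n..N}. I k) + 2 * (\<Sum>k\<in>{n..N}. I k * y k * (y N - y k)) \<le> (y N)\<^sup>2"
    by (fact conjunct1, fact conjunct2)
qed

lemma abs_sq_le: "\<bar>x\<bar> \<le> (c::real) \<Longrightarrow> \<bar>x\<^sup>2\<bar> \<le> c\<^sup>2"
proof -
  assume h: "\<bar>x\<bar> \<le> c"
  have "\<bar>x\<bar>\<^sup>2 \<le> c\<^sup>2" using h by (intro power_mono) auto
  then show ?thesis by simp
qed

lemma abs_mult_le: "\<bar>x\<bar> \<le> (a::real) \<Longrightarrow> \<bar>y\<bar> \<le> b \<Longrightarrow> \<bar>x * y\<bar> \<le> a * b"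
  by (simp add: abs_mult mult_mono')

locale mart = prob_space M for M :: "'w measure" +
  fixes F :: "nat \<Rightarrow> 'w measure" and d :: "nat \<Rightarrow> 'w \<Rightarrow> real" and Cd V :: real
  assumes F_sub: "\<And>t. subalgebra M (F t)"
    and F_mono: "\<And>t. sets (F t) \<subseteq> sets (F (Suc t))"
    and d_meas: "\<And>t. d t \<in> borel_measurable (F (Suc t))"
    and d_bnd: "\<And>t w. \<bar>d t w\<bar> \<le> Cd"
    and orth: "\<And>t Z B. Z \<in> borel_measurable (F t) \<Longrightarrow> (\<And>w. \<bar>Z w\<bar> \<le> B) \<Longrightarrow> (\<integral>w. Z w * d t w \<partial>M) = 0"
    and var_bnd: "\<And>N. (\<Sum>t<N. \<integral>w. (d t w)\<^sup>2 \<partial>M) \<le> V"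
begin

lemma Cd_nn: "0 \<le> Cd" using d_bnd[of 0 undefined] by linarith

lemma F_sets_le: "t \<le> u \<Longrightarrow> sets (F t) \<subseteq> sets (F u)"
proof (induction u rule: dec_induct)
  case (step n) then show ?case using F_mono[of n] by blast
qed simp

lemma meas_le: "t \<le> u \<Longrightarrow> f \<in> borel_measurable (F t) \<Longrightarrow> f \<in> borel_measurable (F u)"
proof -
  assume tu: "t \<le> u" and f: "f \<in> borel_measurable (F t)"
  have "subalgebra (F u) (F t)"
    using F_sets_le[OF tu] F_sub[of t] F_sub[of u] unfolding subalgebra_def by auto
  then show ?thesis using f by (rule measurable_from_subalg)
qed

lemma measM: "f \<in> borel_measurable (F t) \<Longrightarrow> f \<in> borel_measurable M"
  by (rule measurable_from_subalg[OF F_sub])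

lemma intb: "f \<in> borel_measurable M \<Longrightarrow> (\<And>w. \<bar>f w\<bar> \<le> (B::real)) \<Longrightarrow> integrable M f"
  by (rule integrable_const_bound[where B=B]) auto

definition TT :: "nat \<Rightarrow> nat \<Rightarrow> 'w \<Rightarrow> real" where
  "TT n k w = (\<Sum>t\<in>{n..<k}. d t w)"

lemma TT_meas: "TT n k \<in> borel_measurable (F k)"
  unfolding TT_def
proof (rule borel_measurable_sum)
  fix t assume "t \<in> {n..<k}"
  then show "d t \<in> borel_measurable (F k)" using meas_le[of "Suc t" k] d_meas by auto
qed

lemma TT_meas_le: "j \<le> k \<Longrightarrow> TT n j \<in> borel_measurable (F k)"
  using meas_le TT_meas by blast

lemma TT_bnd: "\<bar>TT n k w\<bar> \<le> real k * Cd"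
proof -
  have "\<bar>TT n k w\<bar> \<le> (\<Sum>t\<in>{n..<k}. \<bar>d t w\<bar>)" unfolding TT_def by (rule sum_abs)
  also have "\<dots> \<le> real (card {n..<k}) * Cd" by (rule sum_bounded_above) (rule d_bnd)
  also have "\<dots> \<le> real k * Cd" using Cd_nn by (intro mult_right_mono) auto
  finally show ?thesis .
qed

lemma d_measM: "d t \<in> borel_measurable M" using measM d_meas by blast

lemma sq_sum: "n \<le> N \<Longrightarrow> (\<integral>w. (TT n N w)\<^sup>2 \<partial>M) = (\<Sum>t\<in>{n..<N}. \<integral>w. (d t w)\<^sup>2 \<partial>M)"
proof (induction N rule: dec_induct)
  case base then show ?case by (simp add: TT_def)
next
  case (step N)
  have TS: "TT n (Suc N) w = TT n N w + d N w" for w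
    unfolding TT_def using step(1) by (simp add: sum.atLeastLessThan_Suc)
  have mT: "TT n N \<in> borel_measurable M" using measM TT_meas by blast
  have i1: "integrable M (\<lambda>w. (TT n N w)\<^sup>2)"
    by (rule intb[where B="(real N * Cd)\<^sup>2"]) (use mT in simp, rule abs_sq_le, rule TT_bnd)
  have i2: "integrable M (\<lambda>w. 2 * (TT n N w * d N w))"
  proof (rule intb[where B="2 * (real N * Cd * Cd)"])
    show "(\<lambda>w. 2 * (TT n N w * d N w)) \<in> borel_measurable M"
      by (intro borel_measurable_times borel_measurable_const mT d_measM)
    fix w show "\<bar>2 * (TT n N w * d N w)\<bar> \<le> 2 * (real N * Cd * Cd)"
      using abs_mult_le[OF TT_bnd[of n N w] d_bnd[of N w]] by simp
  qed
  have i3: "integrable M (\<lambda>w. (d N w)\<^sup>2)"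
    by (rule intb[where B="Cd\<^sup>2"]) (use d_measM in simp, rule abs_sq_le, rule d_bnd)
  have o: "(\<integral>w. TT n N w * d N w \<partial>M) = 0"
    by (rule orth[OF TT_meas]) (rule TT_bnd)
  have "(\<integral>w. (TT n (Suc N) w)\<^sup>2 \<partial>M) = (\<integral>w. (TT n N w)\<^sup>2 + 2 * (TT n N w * d N w) + (d N w)\<^sup>2 \<partial>M)"
    unfolding TS by (simp add: power2_eq_square algebra_simps)
  also have "\<dots> = (\<integral>w. (TT n N w)\<^sup>2 \<partial>M) + 2 * (\<integral>w. TT n N w * d N w \<partial>M) + (\<integral>w. (d N w)\<^sup>2 \<partial>M)"
    using i1 i2 i3 by simp
  also have "\<dots> = (\<Sum>t\<in>{n..<Suc N}. \<integral>w. (d t w)\<^sup>2 \<partial>M)"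
    using step(1) step.IH o by (simp add: sum.atLeastLessThan_Suc)
  finally show ?case .
qed

lemma TT_bndN: "k \<le> N \<Longrightarrow> \<bar>TT n k w\<bar> \<le> real N * Cd"
  using TT_bnd[of n k w] Cd_nn by (smt (verit) mult_right_mono of_nat_le_iff)

lemma kolm:
  assumes eps: "0 < \<epsilon>" and nN: "n \<le> N"
  shows "\<epsilon>\<^sup>2 * measure M {w \<in> space M. \<exists>k\<in>{n..N}. \<epsilon> \<le> \<bar>TT n k w\<bar>}
    \<le> (\<Sum>t\<in>{n..<N}. \<integral>w. (d t w)\<^sup>2 \<partial>M)"
proof -
  define I where "I k w = (if \<epsilon> \<le> \<bar>TT n k w\<bar> \<and> (\<forall>j\<in>{n..<k}. \<bar>TT n j w\<bar> < \<epsilon>) then 1 else (0::real))" for k w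
  define E where "E = {w \<in> space M. \<exists>k\<in>{n..N}. \<epsilon> \<le> \<bar>TT n k w\<bar>}"
  have I_meas: "I k \<in> borel_measurable (F k)" for k
  proof -
    have [measurable]: "TT n k \<in> borel_measurable (F k)" by (rule TT_meas)
    have p1: "Measurable.pred (F k) (\<lambda>w. \<epsilon> \<le> \<bar>TT n k w\<bar>)" by measurable
    have p2: "Measurable.pred (F k) (\<lambda>w. \<forall>j\<in>{n..<k}. \<bar>TT n j w\<bar> < \<epsilon>)"
    proof (rule pred_intros_countable_bounded(3))
      fix j assume "j \<in> {n..<k}"
      then have [measurable]: "TT n j \<in> borel_measurable (F k)" using TT_meas_le by simp
      show "Measurable.pred (F k) (\<lambda>w. \<bar>TT n j w\<bar> < \<epsilon>)" by measurable
    qed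
    show ?thesis unfolding I_def using p1 p2 by measurable
  qed
  have I_bnd: "\<bar>I k w\<bar> \<le> 1" for k w by (simp add: I_def)
  have pw1: "(\<Sum>k\<in>{n..N}. I k w) = (if \<exists>k\<in>{n..N}. \<epsilon> \<le> \<bar>TT n k w\<bar> then 1 else 0)" for w
    unfolding I_def by (rule first_hit(1)[OF eps nN, of "\<lambda>k. TT n k w"])
  have pw2: "\<epsilon>\<^sup>2 * (\<Sum>k\<in>{n..N}. I k w) + 2 * (\<Sum>k\<in>{n..N}. I k w * TT n k w * (TT n N w - TT n k w))
      \<le> (TT n N w)\<^sup>2" for w
    unfolding I_def by (rule first_hit(2)[OF eps nN, of "\<lambda>k. TT n k w"])
  have Z_meas: "(\<lambda>w. I k w * TT n k w) \<in> borel_measurable (F k)" for k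
    using I_meas TT_meas by (intro borel_measurable_times)
  have Z_bnd: "\<bar>I k w * TT n k w\<bar> \<le> 1 * (real k * Cd)" for k w
    by (rule abs_mult_le[OF I_bnd TT_bnd])
  have diffsum: "TT n N w - TT n k w = (\<Sum>t\<in>{k..<N}. d t w)" if "n \<le> k" "k \<le> N" for k w
    using sum.atLeastLessThan_concat[OF that, of "\<lambda>t. d t w"] unfolding TT_def by simp
  have int_term: "integrable M (\<lambda>w. I k w * TT n k w * d t w)" for k t
  proof (rule intb[where B="1 * (real k * Cd) * Cd"])
    show "(\<lambda>w. I k w * TT n k w * d t w) \<in> borel_measurable M"
      by (rule borel_measurable_times[OF measM[OF Z_meas] d_measM])
    fix w show "\<bar>I k w * TT n k w * d t w\<bar> \<le> 1 * (real k * Cd) * Cd"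
      by (rule abs_mult_le[OF Z_bnd d_bnd])
  qed
  have zero: "(\<integral>w. I k w * TT n k w * (TT n N w - TT n k w) \<partial>M) = 0" if k: "k \<in> {n..N}" for k
  proof -
    have "(\<integral>w. I k w * TT n k w * (TT n N w - TT n k w) \<partial>M)
        = (\<integral>w. (\<Sum>t\<in>{k..<N}. I k w * TT n k w * d t w) \<partial>M)"
      using k by (intro Bochner_Integration.integral_cong refl) (simp add: diffsum sum_distrib_left)
    also have "\<dots> = (\<Sum>t\<in>{k..<N}. \<integral>w. I k w * TT n k w * d t w \<partial>M)"
      by (rule Bochner_Integration.integral_sum) (rule int_term)
    also have "\<dots> = 0"
    proof (rule sum.neutral, rule ballI)
      fix t assume t: "t \<in> {k..<N}"
      show "(\<integral>w. I k w * TT n k w * d t w \<partial>M) = 0"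
        by (rule orth[OF meas_le[OF _ Z_meas] Z_bnd]) (use t in simp)
    qed
    finally show ?thesis .
  qed
  have int_I: "integrable M (I k)" for k
    using measM[OF I_meas] I_bnd by (rule intb)
  have int_K: "integrable M (\<lambda>w. I k w * TT n k w * (TT n N w - TT n k w))" if k: "k \<in> {n..N}" for k
  proof -
    have "integrable M (\<lambda>w. (\<Sum>t\<in>{k..<N}. I k w * TT n k w * d t w))"
      by (rule Bochner_Integration.integrable_sum) (rule int_term)
    moreover have "(\<lambda>w. I k w * TT n k w * (TT n N w - TT n k w)) = (\<lambda>w. (\<Sum>t\<in>{k..<N}. I k w * TT n k w * d t w))"
      using k by (intro ext) (simp add: diffsum sum_distrib_left)
    ultimately show ?thesis by simp
  qed
  have E_meas: "E \<in> sets M"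
  proof -
    have "Measurable.pred M (\<lambda>w. \<exists>k\<in>{n..N}. \<epsilon> \<le> \<bar>TT n k w\<bar>)"
    proof (rule pred_intros_countable_bounded(4))
      fix k
      have [measurable]: "TT n k \<in> borel_measurable M" using measM[OF TT_meas] .
      show "Measurable.pred M (\<lambda>w. \<epsilon> \<le> \<bar>TT n k w\<bar>)" by measurable
    qed
    then show ?thesis unfolding E_def by measurable
  qed
  have intS: "(\<integral>w. (\<Sum>k\<in>{n..N}. I k w) \<partial>M) = measure M E"
  proof -
    have "(\<integral>w. (\<Sum>k\<in>{n..N}. I k w) \<partial>M) = (\<integral>w. indicator E w \<partial>M)"
      by (intro Bochner_Integration.integral_cong refl) (simp add: pw1 E_def indicator_def)
    also have "\<dots> = measure M E" using E_meas sets.sets_into_space by (simp add: Int_absorb2)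
    finally show ?thesis .
  qed
  have "(\<integral>w. \<epsilon>\<^sup>2 * (\<Sum>k\<in>{n..N}. I k w) + 2 * (\<Sum>k\<in>{n..N}. I k w * TT n k w * (TT n N w - TT n k w)) \<partial>M)
      \<le> (\<integral>w. (TT n N w)\<^sup>2 \<partial>M)"
  proof (rule integral_mono)
    show "integrable M (\<lambda>w. \<epsilon>\<^sup>2 * (\<Sum>k\<in>{n..N}. I k w) + 2 * (\<Sum>k\<in>{n..N}. I k w * TT n k w * (TT n N w - TT n k w)))"
      using int_I int_K by (intro Bochner_Integration.integrable_add integrable_mult_right Bochner_Integration.integrable_sum) auto
    show "integrable M (\<lambda>w. (TT n N w)\<^sup>2)"
      by (rule intb[where B="(real N * Cd)\<^sup>2"]) (use measM[OF TT_meas] in simp, rule abs_sq_le, rule TT_bnd)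
    fix w show "\<epsilon>\<^sup>2 * (\<Sum>k\<in>{n..N}. I k w) + 2 * (\<Sum>k\<in>{n..N}. I k w * TT n k w * (TT n N w - TT n k w))
      \<le> (TT n N w)\<^sup>2" by (rule pw2)
  qed
  also have "\<dots> = (\<Sum>t\<in>{n..<N}. \<integral>w. (d t w)\<^sup>2 \<partial>M)" by (rule sq_sum[OF nN])
  finally have "(\<integral>w. \<epsilon>\<^sup>2 * (\<Sum>k\<in>{n..N}. I k w) + 2 * (\<Sum>k\<in>{n..N}. I k w * TT n k w * (TT n N w - TT n k w)) \<partial>M)
      \<le> (\<Sum>t\<in>{n..<N}. \<integral>w. (d t w)\<^sup>2 \<partial>M)" .
  moreover have "(\<integral>w. \<epsilon>\<^sup>2 * (\<Sum>k\<in>{n..N}. I k w) + 2 * (\<Sum>k\<in>{n..N}. I k w * TT n k w * (TT n N w - TT n k w)) \<partial>M)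
      = \<epsilon>\<^sup>2 * measure M E"
  proof -
    have iS: "integrable M (\<lambda>w. \<Sum>k\<in>{n..N}. I k w)"
      using int_I by (intro Bochner_Integration.integrable_sum) auto
    have iK: "integrable M (\<lambda>w. \<Sum>k\<in>{n..N}. I k w * TT n k w * (TT n N w - TT n k w))"
      using int_K by (intro Bochner_Integration.integrable_sum) auto
    have "(\<integral>w. (\<Sum>k\<in>{n..N}. I k w * TT n k w * (TT n N w - TT n k w)) \<partial>M) = 0"
      using int_K zero by (subst Bochner_Integration.integral_sum) auto
    then show ?thesis using iS iK intS by simp
  qed
  ultimately show ?thesis unfolding E_def by simp
qed

lemma TT_measM[measurable]: "TT n k \<in> borel_measurable M"
  using measM[OF TT_meas] .

lemma tail_bound:
  assumes eps: "0 < \<epsilon>"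
  shows "\<epsilon>\<^sup>2 * measure M {w \<in> space M. \<exists>k\<ge>n. \<epsilon> \<le> \<bar>TT n k w\<bar>}
    \<le> (\<Sum>t. \<integral>w. (d t w)\<^sup>2 \<partial>M) - (\<Sum>t<n. \<integral>w. (d t w)\<^sup>2 \<partial>M)"
proof -
  define v where "v t = (\<integral>w. (d t w)\<^sup>2 \<partial>M)" for t
  have vnn: "0 \<le> v t" for t unfolding v_def by simp
  have sv: "summable v" using var_bnd vnn unfolding v_def by (intro summableI_nonneg_bounded) auto
  define A where "A N = {w \<in> space M. \<exists>k\<in>{n..n+N}. \<epsilon> \<le> \<bar>TT n k w\<bar>}" for N
  have A_meas: "A N \<in> sets M" for N
  proof -
    have "Measurable.pred M (\<lambda>w. \<exists>k\<in>{n..n+N}. \<epsilon> \<le> \<bar>TT n k w\<bar>)"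
      by (rule pred_intros_countable_bounded(4)) measurable
    then show ?thesis unfolding A_def by measurable
  qed
  have inc: "incseq A" unfolding incseq_def A_def by force
  have U: "(\<Union>N. A N) = {w \<in> space M. \<exists>k\<ge>n. \<epsilon> \<le> \<bar>TT n k w\<bar>}"
  proof
    show "(\<Union>N. A N) \<subseteq> {w \<in> space M. \<exists>k\<ge>n. \<epsilon> \<le> \<bar>TT n k w\<bar>}" unfolding A_def by auto
    show "{w \<in> space M. \<exists>k\<ge>n. \<epsilon> \<le> \<bar>TT n k w\<bar>} \<subseteq> (\<Union>N. A N)"
    proof
      fix x assume "x \<in> {w \<in> space M. \<exists>k\<ge>n. \<epsilon> \<le> \<bar>TT n k w\<bar>}"
      then obtain k where k: "x \<in> space M" "k \<ge> n" "\<epsilon> \<le> \<bar>TT n k x\<bar>" by auto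
      then have "x \<in> A (k - n)" unfolding A_def by auto
      then show "x \<in> (\<Union>N. A N)" by blast
    qed
  qed
  have lim: "(\<lambda>N. measure M (A N)) \<longlonglongrightarrow> measure M (\<Union>N. A N)"
    by (rule finite_measure.finite_Lim_measure_incseq) (use A_meas inc in \<open>auto intro: finite_measure_axioms\<close>)
  have bnd: "\<epsilon>\<^sup>2 * measure M (A N) \<le> suminf v - (\<Sum>t<n. v t)" for N
  proof -
    have "\<epsilon>\<^sup>2 * measure M (A N) \<le> (\<Sum>t\<in>{n..<n+N}. v t)"
      unfolding A_def v_def by (rule kolm[OF eps]) simp
    also have "\<dots> = (\<Sum>t<n+N. v t) - (\<Sum>t<n. v t)"
      using sum.atLeastLessThan_concat[of 0 n "n+N" v] by (simp add: atLeast0LessThan)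
    also have "(\<Sum>t<n+N. v t) \<le> suminf v" using sv vnn by (intro sum_le_suminf) auto
    finally show ?thesis by simp
  qed
  have "(\<lambda>N. \<epsilon>\<^sup>2 * measure M (A N)) \<longlonglongrightarrow> \<epsilon>\<^sup>2 * measure M (\<Union>N. A N)"
    by (intro tendsto_mult tendsto_const lim)
  then have "\<epsilon>\<^sup>2 * measure M (\<Union>N. A N) \<le> suminf v - (\<Sum>t<n. v t)"
    by (rule LIMSEQ_le_const2) (use bnd in auto)
  then show ?thesis unfolding U v_def .
qed

lemma mart_conv: "AE w in M. summable (\<lambda>t. d t w)"
proof -
  define v where "v t = (\<integral>w. (d t w)\<^sup>2 \<partial>M)" for t
  have vnn: "0 \<le> v t" for t unfolding v_def by simp
  have sv: "summable v" using var_bnd vnn unfolding v_def by (intro summableI_nonneg_bounded) auto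
  have tl: "(\<lambda>n. suminf v - (\<Sum>t<n. v t)) \<longlonglongrightarrow> 0"
  proof -
    have "(\<lambda>n. suminf v - (\<Sum>t<n. v t)) \<longlonglongrightarrow> suminf v - suminf v"
      by (intro tendsto_diff tendsto_const summable_LIMSEQ sv)
    then show ?thesis by simp
  qed
  have null: "AE w in M. \<not> (\<forall>n. \<exists>k\<ge>n. 1 / real (Suc j) \<le> \<bar>TT n k w\<bar>)" for j
  proof -
    define \<epsilon> where "\<epsilon> = 1 / real (Suc j)"
    have eps: "0 < \<epsilon>" unfolding \<epsilon>_def by simp
    define B where "B = {w \<in> space M. \<forall>n. \<exists>k\<ge>n. \<epsilon> \<le> \<bar>TT n k w\<bar>}"
    have Bm: "B \<in> sets M" unfolding B_def by measurable
    have "\<epsilon>\<^sup>2 * measure M B \<le> suminf v - (\<Sum>t<n. v t)" for n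
    proof -
      have "B \<subseteq> {w \<in> space M. \<exists>k\<ge>n. \<epsilon> \<le> \<bar>TT n k w\<bar>}" unfolding B_def by auto
      moreover have "{w \<in> space M. \<exists>k\<ge>n. \<epsilon> \<le> \<bar>TT n k w\<bar>} \<in> sets M" by measurable
      ultimately have "measure M B \<le> measure M {w \<in> space M. \<exists>k\<ge>n. \<epsilon> \<le> \<bar>TT n k w\<bar>}"
        by (intro finite_measure_mono)
      then have "\<epsilon>\<^sup>2 * measure M B \<le> \<epsilon>\<^sup>2 * measure M {w \<in> space M. \<exists>k\<ge>n. \<epsilon> \<le> \<bar>TT n k w\<bar>}"
        by (intro mult_left_mono) auto
      also have "\<dots> \<le> suminf v - (\<Sum>t<n. v t)" unfolding v_def by (rule tail_bound[OF eps])
      finally show ?thesis .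
    qed
    then have "\<epsilon>\<^sup>2 * measure M B \<le> 0" by (intro LIMSEQ_le_const[OF tl]) auto
    then have "measure M B = 0" using eps by (simp add: mult_le_0_iff measure_le_0_iff)
    then have "emeasure M B = 0" by (simp add: emeasure_eq_measure)
    moreover have "{w \<in> space M. \<not> \<not> (\<forall>n. \<exists>k\<ge>n. \<epsilon> \<le> \<bar>TT n k w\<bar>)} = B" unfolding B_def by simp
    ultimately show ?thesis unfolding \<epsilon>_def[symmetric] using Bm by (subst AE_iff_measurable) auto
  qed
  then have "AE w in M. \<forall>j. \<not> (\<forall>n. \<exists>k\<ge>n. 1 / real (Suc j) \<le> \<bar>TT n k w\<bar>)"
    by (subst AE_all_countable) auto
  then show ?thesis
  proof eventually_elim
    case (elim w)
    show ?case unfolding summable_Cauchy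
    proof (intro allI impI)
      fix e :: real assume e: "0 < e"
      obtain j :: nat where j: "1 / real (Suc j) < e / 2"
      proof -
        obtain j where "inverse (real (Suc j)) < e / 2" using reals_Archimedean e by (metis half_gt_zero)
        then show ?thesis using that by (simp add: inverse_eq_divide)
      qed
      from elim[rule_format, of j] have "\<exists>n. \<forall>k\<ge>n. \<bar>TT n k w\<bar> < 1 / real (Suc j)"
        by (meson not_le)
      then obtain n where n: "\<And>k. k \<ge> n \<Longrightarrow> \<bar>TT n k w\<bar> < 1 / real (Suc j)" by blast
      show "\<exists>N. \<forall>m\<ge>N. \<forall>k. norm (sum (\<lambda>t. d t w) {m..<k}) < e"
      proof (intro exI allI impI)
        fix m k assume m: "n \<le> m"
        show "norm (sum (\<lambda>t. d t w) {m..<k}) < e"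
        proof (cases "m \<le> k")
          case False then show ?thesis using e by simp
        next
          case True
          have "sum (\<lambda>t. d t w) {m..<k} = TT n k w - TT n m w"
            using sum.atLeastLessThan_concat[OF m True, of "\<lambda>t. d t w"] unfolding TT_def by simp
          moreover have "\<bar>TT n k w\<bar> < 1 / real (Suc j)" "\<bar>TT n m w\<bar> < 1 / real (Suc j)"
            using n m True by auto
          ultimately show ?thesis using j by simp
        qed
      qed
    qed
  qed
qed

end

lemma gfun_lin: "0 < \<alpha> \<Longrightarrow> \<alpha> < 1 \<Longrightarrow> \<exists>c. 0 \<le> c \<and> c \<le> 1 \<and> gfun \<alpha> u = c * u"
proof -
  assume a: "0 < \<alpha>" "\<alpha> < 1"
  show ?thesis
  proof (cases "0 \<le> u")
    case True
    then have "gfun \<alpha> u = \<alpha> * u" by (simp add: gfun_def negpart_def pospart_def)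
    then show ?thesis using a by (intro exI[of _ \<alpha>]) auto
  next
    case False
    then have "gfun \<alpha> u = (1 - \<alpha>) * u" by (simp add: gfun_def negpart_def pospart_def)
    then show ?thesis using a by (intro exI[of _ "1 - \<alpha>"]) auto
  qed
qed

lemma convex_step:
  fixes q y l B :: real
  assumes "0 \<le> l" "l \<le> 1" "\<bar>q\<bar> \<le> B" "\<bar>y\<bar> \<le> B"
  shows "\<bar>q + l * (y - q)\<bar> \<le> B"
proof -
  have "q + l * (y - q) = (1 - l) * q + l * y" by (simp add: algebra_simps)
  also have "\<bar>\<dots>\<bar> \<le> \<bar>(1 - l) * q\<bar> + \<bar>l * y\<bar>" by (rule abs_triangle_ineq)
  also have "\<dots> = (1 - l) * \<bar>q\<bar> + l * \<bar>y\<bar>" using assms by (simp add: abs_mult)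
  also have "\<dots> \<le> (1 - l) * B + l * B" using assms by (intro add_mono mult_left_mono) auto
  also have "\<dots> = B" by (simp add: algebra_simps)
  finally show ?thesis .
qed

context mdp begin

lemma path_bounded:
  fixes q \<zeta> r :: "nat \<Rightarrow> 's \<Rightarrow> 'a \<Rightarrow> real" and sn :: "nat \<Rightarrow> 's \<Rightarrow> 'a \<Rightarrow> 's"
  assumes rec: "\<And>t s a. q (Suc t) s a = q t s a + 2 * \<zeta> t s a * gfun \<alpha> (r t s a + \<gamma> * Vpol \<pi> (q t) (sn t s a) - q t s a)"
    and r01: "\<And>t s a. 0 \<le> r t s a \<and> r t s a \<le> 1"
    and znn: "\<And>t s a. 0 \<le> \<zeta> t s a"
    and z0: "\<And>s a. (\<lambda>t. \<zeta> t s a) \<longlonglongrightarrow> 0"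
  shows "\<exists>B. \<forall>t. nrm (q t) \<le> B"
proof -
  have ev: "eventually (\<lambda>t. \<zeta> t s a < 1/2) sequentially" for s a
  proof -
    have "eventually (\<lambda>t. dist (\<zeta> t s a) 0 < 1/2) sequentially"
      using z0[of s a] unfolding tendsto_iff by (meson half_gt_zero zero_less_one)
    then show ?thesis by (auto elim: eventually_mono simp: dist_real_def)
  qed
  have "eventually (\<lambda>t. \<forall>s a. \<zeta> t s a < 1/2) sequentially"
    using ev by (intro eventually_all_finite) simp
  then obtain T0 where T0: "\<And>t s a. t \<ge> T0 \<Longrightarrow> \<zeta> t s a < 1/2"
    unfolding eventually_sequentially by blast
  define B1 where "B1 = max (nrm (q T0)) (1 / (1 - \<gamma>))"
  have B1g: "1 + \<gamma> * B1 \<le> B1"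
  proof -
    have "1 / (1 - \<gamma>) \<le> B1" unfolding B1_def by simp
    then have "1 \<le> B1 * (1 - \<gamma>)" using gamma by (simp add: field_simps)
    then show ?thesis by (simp add: algebra_simps)
  qed
  have B1nn: "0 \<le> B1" unfolding B1_def using nrm_nonneg[of "q T0"] by (simp add: le_max_iff_disj)
  have late: "nrm (q t) \<le> B1" if "t \<ge> T0" for t
    using that
  proof (induction t rule: dec_induct)
    case base then show ?case unfolding B1_def by simp
  next
    case (step n)
    show ?case
    proof (rule nrm_le)
      fix s a
      define y where "y = r n s a + \<gamma> * Vpol \<pi> (q n) (sn n s a)"
      obtain c where c: "0 \<le> c" "c \<le> 1" "gfun \<alpha> (y - q n s a) = c * (y - q n s a)"
        using gfun_lin[OF alpha] by blast
      have qn: "\<bar>q n s a\<bar> \<le> B1" using nrm_ge[of "q n" s a] step.IH by linarith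
      have "\<bar>\<gamma> * Vpol \<pi> (q n) (sn n s a)\<bar> \<le> \<gamma> * B1"
        using V_abs[of "q n" "sn n s a"] step.IH gamma by (simp add: abs_mult mult_left_mono)
      then have yb: "\<bar>y\<bar> \<le> B1" using r01[of n s a] B1g unfolding y_def by (simp add: abs_le_iff)
      have zl: "2 * \<zeta> n s a * c \<le> 1"
      proof -
        have "2 * \<zeta> n s a \<le> 1" using T0[of n s a] step.hyps by simp
        then show ?thesis using c znn[of n s a] by (metis mult_le_one mult_nonneg_nonneg zero_le_numeral)
      qed
      have "q (Suc n) s a = q n s a + (2 * \<zeta> n s a * c) * (y - q n s a)"
        using rec[of n s a] c(3) unfolding y_def by simp
      moreover have "\<bar>q n s a + (2 * \<zeta> n s a * c) * (y - q n s a)\<bar> \<le> B1"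
        by (rule convex_step) (use zl c znn[of n s a] qn yb in auto)
      ultimately show "\<bar>q (Suc n) s a\<bar> \<le> B1" by simp
    qed
  qed
  define B where "B = max B1 (\<Sum>u<T0. nrm (q u))"
  have "nrm (q t) \<le> B" for t
  proof (cases "t \<ge> T0")
    case True then show ?thesis using late[OF True] unfolding B_def by simp
  next
    case False
    then have "nrm (q t) \<le> (\<Sum>u<T0. nrm (q u))"
      by (intro member_le_sum[where f="\<lambda>u. nrm (q u)"]) (auto intro: nrm_nonneg)
    then show ?thesis unfolding B_def by simp
  qed
  then show ?thesis by blast
qed

end

locale sa = mdp P \<pi> \<alpha> \<gamma> + prob_space M
  for P :: "'s::finite \<Rightarrow> 'a::finite \<Rightarrow> (real \<times> 's) measure" and \<pi> \<alpha> \<gamma> and M :: "'w measure" +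
  fixes F :: "nat \<Rightarrow> 'w measure"
    and R :: "nat \<Rightarrow> 's \<Rightarrow> 'a \<Rightarrow> 'w \<Rightarrow> real"
    and S' :: "nat \<Rightarrow> 's \<Rightarrow> 'a \<Rightarrow> 'w \<Rightarrow> 's"
    and \<zeta> :: "nat \<Rightarrow> 'w \<Rightarrow> 's \<Rightarrow> 'a \<Rightarrow> real"
    and Q :: "nat \<Rightarrow> 'w \<Rightarrow> 's \<Rightarrow> 'a \<Rightarrow> real"
  assumes F_sub: "\<And>t. subalgebra M (F t)"
    and F_mono: "\<And>t. sets (F t) \<subseteq> sets (F (Suc t))"
    and sample_meas: "\<And>t s a. (\<lambda>w. (R t s a w, S' t s a w))
           \<in> measurable (F (Suc t)) (borel \<Otimes>\<^sub>M count_space UNIV)"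
    and sample_law: "\<And>t s a A B. A \<in> sets (F t) \<Longrightarrow> B \<in> sets (borel \<Otimes>\<^sub>M count_space UNIV) \<Longrightarrow>
           measure M (A \<inter> {w \<in> space M. (R t s a w, S' t s a w) \<in> B})
             = measure M A * measure (P s a) B"
    and Q0_meas: "\<And>s a. (\<lambda>w. Q 0 w s a) \<in> borel_measurable (F 0)"
    and zeta_meas: "\<And>t s a. (\<lambda>w. \<zeta> t w s a) \<in> borel_measurable (F t)"
    and zeta_nonneg: "\<And>t w s a. 0 \<le> \<zeta> t w s a"
    and update: "\<And>t w s a. Q (Suc t) w s a = Q t w s a + 2 * \<zeta> t w s a *
           ((1 - \<alpha>) * negpart (R t s a w + \<gamma> * Vpol \<pi> (Q t w) (S' t s a w) - Q t w s a)
            + \<alpha> * pospart (R t s a w + \<gamma> * Vpol \<pi> (Q t w) (S' t s a w) - Q t w s a))"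
begin

abbreviation "BB \<equiv> (borel \<Otimes>\<^sub>M count_space (UNIV :: 's set)) :: (real \<times> 's) measure"

lemma F_sets_le: "t \<le> u \<Longrightarrow> sets (F t) \<subseteq> sets (F u)"
proof (induction u rule: dec_induct)
  case (step n) then show ?case using F_mono[of n] by blast
qed simp

lemma meas_le: "t \<le> u \<Longrightarrow> f \<in> F t \<rightarrow>\<^sub>M N \<Longrightarrow> f \<in> F u \<rightarrow>\<^sub>M N"
proof -
  assume tu: "t \<le> u" and f: "f \<in> F t \<rightarrow>\<^sub>M N"
  have "subalgebra (F u) (F t)"
    using F_sets_le[OF tu] F_sub[of t] F_sub[of u] unfolding subalgebra_def by auto
  then show ?thesis using f by (rule measurable_from_subalg)
qed

lemma measM: "f \<in> F t \<rightarrow>\<^sub>M N \<Longrightarrow> f \<in> M \<rightarrow>\<^sub>M N"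
  by (rule measurable_from_subalg[OF F_sub])

lemma R_meas: "(\<lambda>w. R t s a w) \<in> borel_measurable (F (Suc t))"
  using measurable_compose[OF sample_meas[of t s a] measurable_fst] by simp

lemma S_meas: "(\<lambda>w. S' t s a w) \<in> F (Suc t) \<rightarrow>\<^sub>M count_space UNIV"
  using measurable_compose[OF sample_meas[of t s a] measurable_snd] by simp

lemma Vcomp_meas:
  fixes G :: "'b \<Rightarrow> 's \<Rightarrow> 'a \<Rightarrow> real"
  assumes "\<And>s a. (\<lambda>w. G w s a) \<in> borel_measurable N" and "g \<in> N \<rightarrow>\<^sub>M count_space UNIV"
  shows "(\<lambda>w. Vpol \<pi> (G w) (g w)) \<in> borel_measurable N"
proof (rule measurable_compose_countable'[where f="\<lambda>i w. Vpol \<pi> (G w) i" and I=UNIV])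
  fix i :: 's
  show "(\<lambda>w. Vpol \<pi> (G w) i) \<in> borel_measurable N"
    unfolding Vpol_def using assms(1) by measurable
qed (use assms(2) in auto)

lemma Q_meas: "(\<lambda>w. Q t w s a) \<in> borel_measurable (F t)"
proof (induction t arbitrary: s a)
  case 0 then show ?case by (rule Q0_meas)
next
  case (Suc t)
  have q[measurable]: "(\<lambda>w. Q t w s a) \<in> borel_measurable (F (Suc t))" for s a
    by (rule meas_le[OF _ Suc]) simp
  have z[measurable]: "(\<lambda>w. \<zeta> t w s a) \<in> borel_measurable (F (Suc t))"
    by (rule meas_le[OF _ zeta_meas]) simp
  have r[measurable]: "(\<lambda>w. R t s a w) \<in> borel_measurable (F (Suc t))" by (rule R_meas)
  have v[measurable]: "(\<lambda>w. Vpol \<pi> (Q t w) (S' t s a w)) \<in> borel_measurable (F (Suc t))"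
    by (rule Vcomp_meas[OF q S_meas])
  show ?case unfolding update negpart_def pospart_def by measurable
qed

lemma Q_measM[measurable]: "(\<lambda>w. Q t w s a) \<in> borel_measurable M"
  using measM[OF Q_meas] .

definition Ft :: "nat \<Rightarrow> 'w measure" where "Ft t = restr_to_subalg M (F t)"

lemma Ft_sets: "sets (Ft t) = sets (F t)"
  unfolding Ft_def by (rule sets_restr_to_subalg[OF F_sub])

lemma Ft_space: "space (Ft t) = space M"
  unfolding Ft_def by (rule space_restr_to_subalg)

lemma Ft_prob: "prob_space (Ft t)"
  unfolding Ft_def by (rule prob_space_restr_to_subalg[OF F_sub prob_space_axioms])

lemma id_meas: "(\<lambda>w. w) \<in> M \<rightarrow>\<^sub>M Ft t"
proof (rule measurableI)
  fix x assume "x \<in> space M" then show "x \<in> space (Ft t)" by (simp add: Ft_space)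
next
  fix A assume "A \<in> sets (Ft t)"
  then have "A \<in> sets (F t)" by (simp add: Ft_sets)
  then have A: "A \<in> sets M" "A \<subseteq> space M"
    using F_sub[of t] unfolding subalgebra_def using sets.sets_into_space by auto
  then have "(\<lambda>w. w) -` A \<inter> space M = A" by auto
  then show "(\<lambda>w. w) -` A \<inter> space M \<in> sets M" using A by simp
qed

lemma X_measM: "(\<lambda>w. (R t s a w, S' t s a w)) \<in> M \<rightarrow>\<^sub>M BB"
  using measM[OF sample_meas] .

lemma distr_pair: "distr M (Ft t \<Otimes>\<^sub>M BB) (\<lambda>w. (w, (R t s a w, S' t s a w))) = Ft t \<Otimes>\<^sub>M P s a"
proof (rule pair_measure_eqI[symmetric])
  show "sigma_finite_measure (Ft t)" using Ft_prob by (rule prob_space_imp_sigma_finite)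
  show "sigma_finite_measure (P s a)" using P_prob by (rule prob_space_imp_sigma_finite)
  show "sets (Ft t \<Otimes>\<^sub>M P s a) = sets (distr M (Ft t \<Otimes>\<^sub>M BB) (\<lambda>w. (w, (R t s a w, S' t s a w))))"
    by (simp add: sets_pair_measure_cong[OF refl P_sets])
  fix A B assume A: "A \<in> sets (Ft t)" and B: "B \<in> sets (P s a)"
  have AF: "A \<in> sets (F t)" using A by (simp add: Ft_sets)
  have AM: "A \<in> sets M" "A \<subseteq> space M"
    using AF F_sub[of t] unfolding subalgebra_def using sets.sets_into_space by auto
  have BB': "B \<in> sets BB" using B P_sets by simp
  have gm: "(\<lambda>w. (w, (R t s a w, S' t s a w))) \<in> M \<rightarrow>\<^sub>M Ft t \<Otimes>\<^sub>M BB"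
    by (rule measurable_Pair[OF id_meas X_measM])
  have "emeasure (distr M (Ft t \<Otimes>\<^sub>M BB) (\<lambda>w. (w, (R t s a w, S' t s a w)))) (A \<times> B)
      = emeasure M ((\<lambda>w. (w, (R t s a w, S' t s a w))) -` (A \<times> B) \<inter> space M)"
    by (rule emeasure_distr[OF gm]) (rule pair_measureI[OF A BB'])
  also have "(\<lambda>w. (w, (R t s a w, S' t s a w))) -` (A \<times> B) \<inter> space M
      = A \<inter> {w \<in> space M. (R t s a w, S' t s a w) \<in> B}" using AM by auto
  also have "emeasure M (A \<inter> {w \<in> space M. (R t s a w, S' t s a w) \<in> B})
      = ennreal (measure M A * measure (P s a) B)"
    using sample_law[OF AF BB'] by (simp add: emeasure_eq_measure)
  also have "\<dots> = emeasure (Ft t) A * emeasure (P s a) B"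
  proof -
    interpret p: prob_space "P s a" by (rule P_prob)
    have "emeasure (Ft t) A = emeasure M A" unfolding Ft_def by (rule emeasure_restr_to_subalg[OF F_sub AF])
    then show ?thesis by (simp add: ennreal_mult emeasure_eq_measure p.emeasure_eq_measure)
  qed
  finally show "emeasure (Ft t) A * emeasure (P s a) B
      = emeasure (distr M (Ft t \<Otimes>\<^sub>M BB) (\<lambda>w. (w, (R t s a w, S' t s a w)))) (A \<times> B)" by simp
qed

lemma indep_int:
  fixes f :: "'w \<Rightarrow> real \<times> 's \<Rightarrow> real"
  assumes fm: "(\<lambda>p. f (fst p) (snd p)) \<in> borel_measurable (F t \<Otimes>\<^sub>M BB)"
    and fb: "\<And>w x. \<bar>f w x\<bar> \<le> C"
  shows "(\<integral>w. f w (R t s a w, S' t s a w) \<partial>M) = (\<integral>w. (\<integral>x. f w x \<partial>P s a) \<partial>M)"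
proof -
  interpret p: prob_space "P s a" by (rule P_prob)
  interpret ft: prob_space "Ft t" by (rule Ft_prob)
  interpret pp: pair_prob_space "Ft t" "P s a"
    by (intro pair_prob_space.intro pair_sigma_finite.intro prob_space_imp_sigma_finite Ft_prob P_prob
        ft.prob_space_axioms p.prob_space_axioms)
  have gm: "(\<lambda>w. (w, (R t s a w, S' t s a w))) \<in> M \<rightarrow>\<^sub>M Ft t \<Otimes>\<^sub>M BB"
    by (rule measurable_Pair[OF id_meas X_measM])
  have fm1: "(\<lambda>p. f (fst p) (snd p)) \<in> borel_measurable (Ft t \<Otimes>\<^sub>M BB)"
    using fm by (subst measurable_cong_sets[OF sets_pair_measure_cong[OF Ft_sets refl] refl])
  have fm2: "(\<lambda>p. f (fst p) (snd p)) \<in> borel_measurable (Ft t \<Otimes>\<^sub>M P s a)"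
    using fm by (subst measurable_cong_sets[OF sets_pair_measure_cong[OF Ft_sets P_sets] refl])
  have fm3: "(\<lambda>p. f (fst p) (snd p)) \<in> borel_measurable (F t \<Otimes>\<^sub>M P s a)"
    using fm by (subst measurable_cong_sets[OF sets_pair_measure_cong[OF refl P_sets] refl])
  have "(\<integral>w. f w (R t s a w, S' t s a w) \<partial>M)
      = (\<integral>p. f (fst p) (snd p) \<partial>distr M (Ft t \<Otimes>\<^sub>M BB) (\<lambda>w. (w, (R t s a w, S' t s a w))))"
    by (subst integral_distr[OF gm fm1]) simp
  also have "\<dots> = (\<integral>p. f (fst p) (snd p) \<partial>(Ft t \<Otimes>\<^sub>M P s a))" by (simp add: distr_pair)
  also have "\<dots> = (\<integral>w. (\<integral>x. f w x \<partial>P s a) \<partial>Ft t)"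
  proof -
    have "integrable (Ft t \<Otimes>\<^sub>M P s a) (\<lambda>p. f (fst p) (snd p))"
      by (rule pp.integrable_const_bound[where B=C]) (use fb fm2 in auto)
    then show ?thesis by (subst pp.integral_fst'[symmetric]) auto
  qed
  also have "\<dots> = (\<integral>w. (\<integral>x. f w x \<partial>P s a) \<partial>M)"
  proof -
    have "(\<lambda>w. \<integral>x. f w x \<partial>P s a) \<in> borel_measurable (F t)"
      by (rule p.borel_measurable_lebesgue_integral) (use fm3 in \<open>simp add: case_prod_beta'\<close>)
    then show ?thesis unfolding Ft_def by (rule integral_subalgebra2[OF F_sub])
  qed
  finally show ?thesis .
qed

end

lemma abs_diff_le2: "\<bar>u\<bar> \<le> A \<Longrightarrow> \<bar>v\<bar> \<le> A \<Longrightarrow> \<bar>u - v\<bar> \<le> 2 * (A::real)"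
  by (simp add: abs_le_iff)

definition clip :: "real \<Rightarrow> real" where "clip r = max 0 (min 1 r)"

context sa begin

lemma pair_V_meas: "(\<lambda>p. Vpol \<pi> (Q t (fst p)) (snd (snd p))) \<in> borel_measurable (F t \<Otimes>\<^sub>M BB)"
proof (rule Vcomp_meas)
  show "(\<lambda>p. Q t (fst p) s a) \<in> borel_measurable (F t \<Otimes>\<^sub>M BB)" for s a
    by (rule measurable_fst''[OF Q_meas])
  show "(\<lambda>p. snd (snd p)) \<in> F t \<Otimes>\<^sub>M BB \<rightarrow>\<^sub>M count_space UNIV"
    by (rule measurable_compose[OF measurable_snd measurable_snd])
qed

lemma pair_fst_meas: "(\<lambda>p. fst (snd p)) \<in> borel_measurable (F t \<Otimes>\<^sub>M BB)"
  by (rule measurable_compose[OF measurable_snd measurable_fst])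

lemma pair_Q_meas: "(\<lambda>p. Q t (fst p) s a) \<in> borel_measurable (F t \<Otimes>\<^sub>M BB)"
  by (rule measurable_fst''[OF Q_meas])

lemma pair_g_meas: "(\<lambda>p. gfun \<alpha> (fst (snd p) + \<gamma> * Vpol \<pi> (Q t (fst p)) (snd (snd p)) - Q t (fst p) s a))
    \<in> borel_measurable (F t \<Otimes>\<^sub>M BB)"
  using pair_V_meas pair_fst_meas pair_Q_meas by measurable

lemma pair_gc_meas: "(\<lambda>p. gfun \<alpha> (clip (fst (snd p)) + \<gamma> * Vpol \<pi> (Q t (fst p)) (snd (snd p)) - Q t (fst p) s a))
    \<in> borel_measurable (F t \<Otimes>\<^sub>M BB)"
  using pair_V_meas pair_fst_meas pair_Q_meas unfolding clip_def by measurable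

lemma hm_meas: "(\<lambda>w. hm (Q t w) s a (Q t w s a)) \<in> borel_measurable (F t)"
proof -
  interpret p: prob_space "P s a" by (rule P_prob)
  have "(\<lambda>p. gfun \<alpha> (fst (snd p) + \<gamma> * Vpol \<pi> (Q t (fst p)) (snd (snd p)) - Q t (fst p) s a))
    \<in> borel_measurable (F t \<Otimes>\<^sub>M P s a)"
    using pair_g_meas by (subst measurable_cong_sets[OF sets_pair_measure_cong[OF refl P_sets] refl])
  then have "(\<lambda>w. \<integral>x. gfun \<alpha> (fst x + \<gamma> * Vpol \<pi> (Q t w) (snd x) - Q t w s a) \<partial>P s a) \<in> borel_measurable (F t)"
    by (intro p.borel_measurable_lebesgue_integral) (simp add: case_prod_beta')
  moreover have "hm (Q t w) s a (Q t w s a) = (\<integral>x. gfun \<alpha> (fst x + \<gamma> * Vpol \<pi> (Q t w) (snd x) - Q t w s a) \<partial>P s a)" for w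
    unfolding hm_def Yf_def by (simp add: case_prod_beta')
  ultimately show ?thesis by simp
qed

lemma clip_bnd: "0 \<le> clip r" "clip r \<le> 1" by (auto simp: clip_def)

lemma clip_id: "0 \<le> r \<Longrightarrow> r \<le> 1 \<Longrightarrow> clip r = r" by (simp add: clip_def)

lemma g_bnd: "0 \<le> r \<Longrightarrow> r \<le> 1 \<Longrightarrow> \<bar>gfun \<alpha> (r + \<gamma> * Vpol \<pi> Qv s' - q)\<bar> \<le> 1 + nrm Qv + \<bar>q\<bar>"
proof -
  assume r: "0 \<le> r" "r \<le> 1"
  have "\<bar>gfun \<alpha> (r + \<gamma> * Vpol \<pi> Qv s' - q)\<bar> \<le> \<bar>r + \<gamma> * Vpol \<pi> Qv s' - q\<bar>" by (rule gfun_abs[OF alpha])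
  also have "\<dots> \<le> \<bar>r\<bar> + \<bar>\<gamma> * Vpol \<pi> Qv s'\<bar> + \<bar>q\<bar>" by (rule order_trans[OF abs_triangle_ineq4]) (simp add: abs_triangle_ineq)
  also have "\<bar>\<gamma> * Vpol \<pi> Qv s'\<bar> \<le> nrm Qv"
  proof -
    have "\<bar>\<gamma> * Vpol \<pi> Qv s'\<bar> = \<gamma> * \<bar>Vpol \<pi> Qv s'\<bar>" using gamma by (simp add: abs_mult)
    also have "\<dots> \<le> 1 * nrm Qv" using gamma V_abs[of Qv s'] nrm_nonneg[of Qv] by (intro mult_mono) auto
    finally show ?thesis by simp
  qed
  finally show ?thesis using r by simp
qed

lemma hm_abs: "\<bar>hm Qv s a q\<bar> \<le> 1 + nrm Qv + \<bar>q\<bar>"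
proof -
  interpret p: prob_space "P s a" by (rule P_prob)
  have "\<bar>hm Qv s a q\<bar> \<le> (\<integral>x. \<bar>gfun \<alpha> (Yf Qv x - q)\<bar> \<partial>P s a)"
    unfolding hm_def using integral_norm_bound[of "P s a" "\<lambda>x. gfun \<alpha> (Yf Qv x - q)"] by simp
  also have "\<dots> \<le> (\<integral>x. 1 + nrm Qv + \<bar>q\<bar> \<partial>P s a)"
  proof (rule integral_mono_AE)
    show "integrable (P s a) (\<lambda>x. \<bar>gfun \<alpha> (Yf Qv x - q)\<bar>)" using int_gY by (rule integrable_abs)
    show "integrable (P s a) (\<lambda>x. 1 + nrm Qv + \<bar>q\<bar>)" by simp
    show "AE x in P s a. \<bar>gfun \<alpha> (Yf Qv x - q)\<bar> \<le> 1 + nrm Qv + \<bar>q\<bar>"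
      using reward_range[of s a] by eventually_elim (auto simp: Yf_def case_prod_beta' intro!: g_bnd)
  qed
  also have "\<dots> = 1 + nrm Qv + \<bar>q\<bar>" using p.prob_space by simp
  finally show ?thesis .
qed

definition fW :: "'s \<Rightarrow> 'a \<Rightarrow> nat \<Rightarrow> 'w \<Rightarrow> real \<times> 's \<Rightarrow> real" where
  "fW s a t w x = gfun \<alpha> (clip (fst x) + \<gamma> * Vpol \<pi> (Q t w) (snd x) - Q t w s a) - hm (Q t w) s a (Q t w s a)"

definition indK :: "real \<Rightarrow> 's \<Rightarrow> 'a \<Rightarrow> nat \<Rightarrow> 'w \<Rightarrow> bool" where
  "indK K s a t w \<longleftrightarrow> (\<forall>u\<in>{..t}. \<forall>s'. \<forall>a'. \<bar>Q u w s' a'\<bar> \<le> K) \<and> (\<Sum>u\<le>t. (\<zeta> u w s a)\<^sup>2) \<le> K"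

definition dK :: "real \<Rightarrow> 's \<Rightarrow> 'a \<Rightarrow> nat \<Rightarrow> 'w \<Rightarrow> real" where
  "dK K s a t w = (if indK K s a t w then \<zeta> t w s a * fW s a t w (R t s a w, S' t s a w) else 0)"

lemma indK_meas: "Measurable.pred (F t) (indK K s a t)"
proof -
  have p1: "Measurable.pred (F t) (\<lambda>w. \<forall>u\<in>{..t}. \<forall>s'. \<forall>a'. \<bar>Q u w s' a'\<bar> \<le> K)"
  proof (rule pred_intros_countable_bounded(3))
    fix u assume "u \<in> {..t}"
    then have [measurable]: "(\<lambda>w. Q u w s' a') \<in> borel_measurable (F t)" for s' a'
      using meas_le[OF _ Q_meas] by simp
    show "Measurable.pred (F t) (\<lambda>w. \<forall>s'. \<forall>a'. \<bar>Q u w s' a'\<bar> \<le> K)" by measurable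
  qed
  have [measurable]: "(\<lambda>w. \<zeta> u w s a) \<in> borel_measurable (F t)" if "u \<le> t" for u
    using meas_le[OF that zeta_meas] .
  have p2: "Measurable.pred (F t) (\<lambda>w. (\<Sum>u\<le>t. (\<zeta> u w s a)\<^sup>2) \<le> K)"
  proof -
    have "(\<lambda>w. \<Sum>u\<le>t. (\<zeta> u w s a)\<^sup>2) \<in> borel_measurable (F t)"
      by (rule borel_measurable_sum) (use meas_le[OF _ zeta_meas] in auto)
    then show ?thesis by measurable
  qed
  show ?thesis unfolding indK_def using p1 p2 by measurable
qed

lemma indK_nrm: "indK K s a t w \<Longrightarrow> nrm (Q t w) \<le> K"
  unfolding indK_def by (intro nrm_le) auto

lemma indK_Q: "indK K s a t w \<Longrightarrow> \<bar>Q t w s' a'\<bar> \<le> K"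
  unfolding indK_def by auto

lemma indK_zeta: "indK K s a t w \<Longrightarrow> \<zeta> t w s a \<le> 1 + K"
proof -
  assume h: "indK K s a t w"
  have "(\<zeta> t w s a)\<^sup>2 \<le> (\<Sum>u\<le>t. (\<zeta> u w s a)\<^sup>2)"
    by (rule member_le_sum[where f="\<lambda>u. (\<zeta> u w s a)\<^sup>2"]) auto
  also have "\<dots> \<le> K" using h unfolding indK_def by simp
  finally have sq: "(\<zeta> t w s a)\<^sup>2 \<le> K" .
  have "\<zeta> t w s a \<le> 1 + (\<zeta> t w s a)\<^sup>2"
  proof (cases "\<zeta> t w s a \<le> 1")
    case True then show ?thesis by (smt (verit) zero_le_power2)
  next
    case False then have "\<zeta> t w s a \<le> \<zeta> t w s a * \<zeta> t w s a" by (simp add: mult_le_cancel_left1)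
    then show ?thesis by (simp add: power2_eq_square)
  qed
  then show ?thesis using sq by simp
qed

lemma fW_bnd: "indK K s a t w \<Longrightarrow> \<bar>fW s a t w x\<bar> \<le> 2 * (1 + 2 * K)"
proof -
  assume h: "indK K s a t w"
  have n: "nrm (Q t w) \<le> K" and q: "\<bar>Q t w s a\<bar> \<le> K" using indK_nrm[OF h] indK_Q[OF h] by auto
  have "\<bar>gfun \<alpha> (clip (fst x) + \<gamma> * Vpol \<pi> (Q t w) (snd x) - Q t w s a)\<bar> \<le> 1 + nrm (Q t w) + \<bar>Q t w s a\<bar>"
    by (rule g_bnd) (rule clip_bnd)+
  moreover have "\<bar>hm (Q t w) s a (Q t w s a)\<bar> \<le> 1 + nrm (Q t w) + \<bar>Q t w s a\<bar>" by (rule hm_abs)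
  ultimately have "\<bar>fW s a t w x\<bar> \<le> 2 * (1 + nrm (Q t w) + \<bar>Q t w s a\<bar>)"
    unfolding fW_def by (intro abs_diff_le2)
  then show ?thesis using n q by simp
qed

lemma K_nn: "indK K s a t w \<Longrightarrow> 0 \<le> K"
  using indK_Q[of K s a t w s a] by linarith

lemma dK_bnd: "\<bar>dK K s a t w\<bar> \<le> \<bar>(1 + K) * (2 * (1 + 2 * K))\<bar>"
proof (cases "indK K s a t w")
  case True
  have "\<bar>\<zeta> t w s a * fW s a t w (R t s a w, S' t s a w)\<bar> \<le> (1 + K) * (2 * (1 + 2 * K))"
    using indK_zeta[OF True] zeta_nonneg[of t w s a] fW_bnd[OF True]
    by (intro abs_mult_le) auto
  then show ?thesis using True unfolding dK_def by simp
qed (simp add: dK_def)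

lemma gc_meas: "(\<lambda>x. gfun \<alpha> (clip (fst x) + \<gamma> * Vpol \<pi> Qv (snd x) - q)) \<in> borel_measurable (P s a)"
proof -
  have "(\<lambda>x. Vpol \<pi> Qv (snd x)) \<in> borel_measurable BB" by (rule snd_fun_meas)
  then have "(\<lambda>x. gfun \<alpha> (clip (fst x) + \<gamma> * Vpol \<pi> Qv (snd x) - q)) \<in> borel_measurable BB"
    unfolding clip_def by measurable
  then show ?thesis by (subst measurable_cong_sets[OF P_sets refl])
qed

lemma int_gc: "(\<integral>x. gfun \<alpha> (clip (fst x) + \<gamma> * Vpol \<pi> Qv (snd x) - q) \<partial>P s a) = hm Qv s a q"
  unfolding hm_def
proof (rule integral_cong_AE)
  show "(\<lambda>x. gfun \<alpha> (clip (fst x) + \<gamma> * Vpol \<pi> Qv (snd x) - q)) \<in> borel_measurable (P s a)" by (rule gc_meas)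
  show "(\<lambda>x. gfun \<alpha> (Yf Qv x - q)) \<in> borel_measurable (P s a)"
    using Yf_measP by measurable
  show "AE x in P s a. gfun \<alpha> (clip (fst x) + \<gamma> * Vpol \<pi> Qv (snd x) - q) = gfun \<alpha> (Yf Qv x - q)"
    using reward_range[of s a] by eventually_elim (auto simp: clip_id Yf_def case_prod_beta')
qed

lemma int_gc_int: "integrable (P s a) (\<lambda>x. gfun \<alpha> (clip (fst x) + \<gamma> * Vpol \<pi> Qv (snd x) - q))"
proof -
  interpret p: prob_space "P s a" by (rule P_prob)
  show ?thesis
    by (rule p.integrable_const_bound[where B="1 + nrm Qv + \<bar>q\<bar>"])
       (use gc_meas in \<open>auto intro!: g_bnd clip_bnd\<close>)
qed

lemma fW_pair_meas: "(\<lambda>p. fW s a t (fst p) (snd p)) \<in> borel_measurable (F t \<Otimes>\<^sub>M BB)"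
proof -
  have [measurable]: "(\<lambda>p. hm (Q t (fst p)) s a (Q t (fst p) s a)) \<in> borel_measurable (F t \<Otimes>\<^sub>M BB)"
    by (rule measurable_fst''[OF hm_meas])
  have [measurable]: "(\<lambda>p. gfun \<alpha> (clip (fst (snd p)) + \<gamma> * Vpol \<pi> (Q t (fst p)) (snd (snd p)) - Q t (fst p) s a))
    \<in> borel_measurable (F t \<Otimes>\<^sub>M BB)" by (rule pair_gc_meas)
  show ?thesis unfolding fW_def by measurable
qed

lemma dK_meas: "dK K s a t \<in> borel_measurable (F (Suc t))"
proof -
  have q: "(\<lambda>w. Q t w s a) \<in> borel_measurable (F (Suc t))" for s a by (rule meas_le[OF _ Q_meas]) simp
  have pI: "{w \<in> space (F (Suc t)). indK K s a t w} \<in> sets (F (Suc t))"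
    by (rule predE) (rule meas_le[OF _ indK_meas], simp)
  have c: "(\<lambda>w. clip (R t s a w)) \<in> borel_measurable (F (Suc t))"
    unfolding clip_def by (intro borel_measurable_max borel_measurable_min borel_measurable_const R_meas)
  have in1: "(\<lambda>w. clip (R t s a w) + \<gamma> * Vpol \<pi> (Q t w) (S' t s a w) - Q t w s a) \<in> borel_measurable (F (Suc t))"
    by (intro borel_measurable_add borel_measurable_diff borel_measurable_times borel_measurable_const c
        Vcomp_meas[OF q S_meas] q)
  have g1: "(\<lambda>w. gfun \<alpha> (clip (R t s a w) + \<gamma> * Vpol \<pi> (Q t w) (S' t s a w) - Q t w s a)) \<in> borel_measurable (F (Suc t))"
    by (rule measurable_compose[OF in1 gfun_measurable])
  have h1: "(\<lambda>w. hm (Q t w) s a (Q t w s a)) \<in> borel_measurable (F (Suc t))"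
    by (rule meas_le[OF _ hm_meas]) simp
  have z1: "(\<lambda>w. \<zeta> t w s a) \<in> borel_measurable (F (Suc t))" by (rule meas_le[OF _ zeta_meas]) simp
  have "(\<lambda>w. \<zeta> t w s a * fW s a t w (R t s a w, S' t s a w)) \<in> borel_measurable (F (Suc t))"
    unfolding fW_def fst_conv snd_conv by (intro borel_measurable_times borel_measurable_diff z1 g1 h1)
  then show ?thesis unfolding dK_def by (rule measurable_If[OF _ borel_measurable_const pI])
qed

lemma dK_sq_sum: "(\<Sum>t<N. (dK K s a t w)\<^sup>2) \<le> (2 * (1 + 2 * K))\<^sup>2 * max K 0"
proof -
  define A where "A N = (\<Sum>t<N. if indK K s a t w then (\<zeta> t w s a)\<^sup>2 else 0)" for N
  have A1: "A N \<le> (\<Sum>t<N. (\<zeta> t w s a)\<^sup>2)" for N unfolding A_def by (rule sum_mono) auto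
  have A2: "A N \<le> max K 0" for N
  proof (induction N)
    case 0 then show ?case by (simp add: A_def)
  next
    case (Suc N)
    show ?case
    proof (cases "indK K s a N w")
      case True
      have "A (Suc N) = A N + (\<zeta> N w s a)\<^sup>2" using True by (simp add: A_def)
      also have "\<dots> \<le> (\<Sum>t<N. (\<zeta> t w s a)\<^sup>2) + (\<zeta> N w s a)\<^sup>2" using A1[of N] by simp
      also have "\<dots> = (\<Sum>t\<le>N. (\<zeta> t w s a)\<^sup>2)" by (simp add: lessThan_Suc_atMost[symmetric])
      also have "\<dots> \<le> K" using True unfolding indK_def by simp
      finally show ?thesis by simp
    next
      case False then show ?thesis using Suc by (simp add: A_def)
    qed
  qed
  have "(dK K s a t w)\<^sup>2 \<le> (2 * (1 + 2 * K))\<^sup>2 * (if indK K s a t w then (\<zeta> t w s a)\<^sup>2 else 0)" for t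
  proof (cases "indK K s a t w")
    case True
    have "\<bar>fW s a t w (R t s a w, S' t s a w)\<bar>\<^sup>2 \<le> (2 * (1 + 2 * K))\<^sup>2"
      using fW_bnd[OF True] by (intro power_mono) auto
    then have "(\<zeta> t w s a)\<^sup>2 * (fW s a t w (R t s a w, S' t s a w))\<^sup>2 \<le> (\<zeta> t w s a)\<^sup>2 * (2 * (1 + 2 * K))\<^sup>2"
      by (intro mult_left_mono) auto
    then show ?thesis using True by (simp add: dK_def power_mult_distrib mult.commute)
  qed (simp add: dK_def)
  then have "(\<Sum>t<N. (dK K s a t w)\<^sup>2) \<le> (\<Sum>t<N. (2 * (1 + 2 * K))\<^sup>2 * (if indK K s a t w then (\<zeta> t w s a)\<^sup>2 else 0))"
    by (intro sum_mono) auto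
  also have "\<dots> = (2 * (1 + 2 * K))\<^sup>2 * A N" unfolding A_def by (simp add: sum_distrib_left)
  also have "\<dots> \<le> (2 * (1 + 2 * K))\<^sup>2 * max K 0" using A2 by (intro mult_left_mono) auto
  finally show ?thesis .
qed

lemma dK_mart: "mart M F (dK K s a) \<bar>(1 + K) * (2 * (1 + 2 * K))\<bar> ((2 * (1 + 2 * K))\<^sup>2 * max K 0)"
proof (rule mart.intro[OF prob_space_axioms], rule mart_axioms.intro)
  show "\<And>t. subalgebra M (F t)" by (rule F_sub)
  show "\<And>t. sets (F t) \<subseteq> sets (F (Suc t))" by (rule F_mono)
  show "\<And>t. dK K s a t \<in> borel_measurable (F (Suc t))" by (rule dK_meas)
  show "\<And>t w. \<bar>dK K s a t w\<bar> \<le> \<bar>(1 + K) * (2 * (1 + 2 * K))\<bar>" by (rule dK_bnd)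
  show "(\<Sum>t<N. \<integral>w. (dK K s a t w)\<^sup>2 \<partial>M) \<le> (2 * (1 + 2 * K))\<^sup>2 * max K 0" for N
  proof -
    have dm: "dK K s a t \<in> borel_measurable M" for t by (rule measM[OF dK_meas])
    have ii: "integrable M (\<lambda>w. (dK K s a t w)\<^sup>2)" for t
    proof (rule integrable_const_bound[where B="\<bar>(1 + K) * (2 * (1 + 2 * K))\<bar>\<^sup>2"])
      show "AE w in M. norm ((dK K s a t w)\<^sup>2) \<le> \<bar>(1 + K) * (2 * (1 + 2 * K))\<bar>\<^sup>2"
        by (intro AE_I2) (simp only: real_norm_def, rule abs_sq_le[OF dK_bnd])
    qed (use dm in simp)
    have "(\<Sum>t<N. \<integral>w. (dK K s a t w)\<^sup>2 \<partial>M) = (\<integral>w. (\<Sum>t<N. (dK K s a t w)\<^sup>2) \<partial>M)"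
      by (rule Bochner_Integration.integral_sum[symmetric]) (rule ii)
    also have "\<dots> \<le> (\<integral>w. (2 * (1 + 2 * K))\<^sup>2 * max K 0 \<partial>M)"
      by (rule integral_mono) (use ii dK_sq_sum in auto)
    also have "\<dots> = (2 * (1 + 2 * K))\<^sup>2 * max K 0" using prob_space by simp
    finally show ?thesis .
  qed
  show "(\<integral>w. Z w * dK K s a t w \<partial>M) = 0"
    if Zm: "Z \<in> borel_measurable (F t)" and Zb: "\<And>w. \<bar>Z w\<bar> \<le> B" for t Z B
  proof -
    define f where "f w x = Z w * (if indK K s a t w then \<zeta> t w s a * fW s a t w x else 0)" for w x
    have fm: "(\<lambda>p. f (fst p) (snd p)) \<in> borel_measurable (F t \<Otimes>\<^sub>M BB)"
    proof -
      have [measurable]: "(\<lambda>p. fW s a t (fst p) (snd p)) \<in> borel_measurable (F t \<Otimes>\<^sub>M BB)" by (rule fW_pair_meas)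
      have [measurable]: "Measurable.pred (F t) (indK K s a t)" by (rule indK_meas)
      have [measurable]: "(\<lambda>w. \<zeta> t w s a) \<in> borel_measurable (F t)" by (rule zeta_meas)
      have [measurable]: "Z \<in> borel_measurable (F t)" by (rule Zm)
      show ?thesis unfolding f_def by measurable
    qed
    have fb: "\<bar>f w x\<bar> \<le> B * \<bar>(1 + K) * (2 * (1 + 2 * K))\<bar>" for w x
    proof -
      have "\<bar>(if indK K s a t w then \<zeta> t w s a * fW s a t w x else 0)\<bar> \<le> \<bar>(1 + K) * (2 * (1 + 2 * K))\<bar>"
      proof (cases "indK K s a t w")
        case True
        have "\<bar>\<zeta> t w s a * fW s a t w x\<bar> \<le> (1 + K) * (2 * (1 + 2 * K))"
          using indK_zeta[OF True] zeta_nonneg[of t w s a] fW_bnd[OF True] by (intro abs_mult_le) auto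
        then show ?thesis using True by simp
      qed simp
      then show ?thesis unfolding f_def by (rule abs_mult_le[OF Zb])
    qed
    have inner: "(\<integral>x. f w x \<partial>P s a) = 0" for w
    proof (cases "indK K s a t w")
      case True
      have "(\<integral>x. f w x \<partial>P s a) = (\<integral>x. (Z w * \<zeta> t w s a) * fW s a t w x \<partial>P s a)"
        unfolding f_def using True by (simp add: mult.assoc)
      also have "\<dots> = (Z w * \<zeta> t w s a) * (\<integral>x. fW s a t w x \<partial>P s a)" by (rule integral_mult_right_zero)
      also have "(\<integral>x. fW s a t w x \<partial>P s a) = 0"
      proof -
        interpret p: prob_space "P s a" by (rule P_prob)
        have "(\<integral>x. fW s a t w x \<partial>P s a) = (\<integral>x. gfun \<alpha> (clip (fst x) + \<gamma> * Vpol \<pi> (Q t w) (snd x) - Q t w s a) \<partial>P s a)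
            - (\<integral>x. hm (Q t w) s a (Q t w s a) \<partial>P s a)"
          unfolding fW_def by (rule Bochner_Integration.integral_diff[OF int_gc_int]) simp
        also have "\<dots> = 0" using p.prob_space by (simp add: int_gc)
        finally show ?thesis .
      qed
      finally show ?thesis by simp
    qed (simp add: f_def)
    have "(\<integral>w. Z w * dK K s a t w \<partial>M) = (\<integral>w. f w (R t s a w, S' t s a w) \<partial>M)"
      unfolding f_def dK_def by simp
    also have "\<dots> = (\<integral>w. (\<integral>x. f w x \<partial>P s a) \<partial>M)" by (rule indep_int[OF fm fb])
    also have "\<dots> = 0" by (simp add: inner)
    finally show ?thesis .
  qed
qed

lemma dK_summable: "AE w in M. summable (\<lambda>t. dK K s a t w)"
proof -
  interpret m: mart M F "dK K s a" "\<bar>(1 + K) * (2 * (1 + 2 * K))\<bar>" "(2 * (1 + 2 * K))\<^sup>2 * max K 0"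
    by (rule dK_mart)
  show ?thesis by (rule m.mart_conv)
qed

end

context sa begin

lemma R01_one: "AE w in M. 0 \<le> R t s a w \<and> R t s a w \<le> 1"
proof -
  interpret p: prob_space "P s a" by (rule P_prob)
  define Bad where "Bad = {x \<in> space BB. \<not> (0 \<le> fst x \<and> fst x \<le> 1)}"
  have Bad_sets: "Bad \<in> sets BB" unfolding Bad_def by measurable
  have spP: "space (P s a) = space BB" by (rule sets_eq_imp_space_eq[OF P_sets])
  have "emeasure (P s a) Bad = 0"
  proof -
    have e: "{x \<in> space (P s a). \<not> (0 \<le> fst x \<and> fst x \<le> 1)} = Bad" unfolding Bad_def spP ..
    have "Bad \<in> sets (P s a)" using Bad_sets P_sets by simp
    then have "{x \<in> space (P s a). \<not> (0 \<le> fst x \<and> fst x \<le> 1)} \<in> sets (P s a)" unfolding e .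
    from AE_iff_measurable[OF this refl] reward_range[of s a]
    have "emeasure (P s a) {x \<in> space (P s a). \<not> (0 \<le> fst x \<and> fst x \<le> 1)} = 0" by simp
    then show ?thesis unfolding e .
  qed
  then have mB: "measure (P s a) Bad = 0" by (simp add: p.emeasure_eq_measure)
  have spF: "space M \<in> sets (F t)"
    using F_sub[of t] sets.top[of "F t"] unfolding subalgebra_def by simp
  have "measure M (space M \<inter> {w \<in> space M. (R t s a w, S' t s a w) \<in> Bad}) = 0"
    using sample_law[OF spF Bad_sets] mB by simp
  moreover have "space M \<inter> {w \<in> space M. (R t s a w, S' t s a w) \<in> Bad}
      = {w \<in> space M. \<not> (0 \<le> R t s a w \<and> R t s a w \<le> 1)}"
    unfolding Bad_def by (auto simp: space_pair_measure)
  ultimately have m0: "measure M {w \<in> space M. \<not> (0 \<le> R t s a w \<and> R t s a w \<le> 1)} = 0" by simp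
  have [measurable]: "(\<lambda>w. R t s a w) \<in> borel_measurable M" by (rule measM[OF R_meas])
  have sm: "{w \<in> space M. \<not> (0 \<le> R t s a w \<and> R t s a w \<le> 1)} \<in> sets M" by measurable
  show ?thesis
    by (subst AE_iff_measurable[OF sm refl]) (use m0 in \<open>simp add: emeasure_eq_measure\<close>)
qed

lemma R01: "AE w in M. \<forall>t. \<forall>s\<in>UNIV. \<forall>a\<in>UNIV. 0 \<le> R t s a w \<and> R t s a w \<le> 1"
proof -
  have "AE w in M. \<forall>s\<in>UNIV. \<forall>a\<in>UNIV. 0 \<le> R t s a w \<and> R t s a w \<le> 1" for t
    by (intro AE_finite_allI R01_one) auto
  then show ?thesis by (subst AE_all_countable) auto
qed

lemma dK_all: "AE w in M. \<forall>K::nat. \<forall>s\<in>UNIV. \<forall>a\<in>UNIV. summable (\<lambda>t. dK (real K) s a t w)"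
proof -
  have "AE w in M. \<forall>s\<in>UNIV. \<forall>a\<in>UNIV. summable (\<lambda>t. dK (real K) s a t w)" for K :: nat
    by (intro AE_finite_allI dK_summable) auto
  then show ?thesis by (subst AE_all_countable) auto
qed

lemma main:
  assumes zeta_sum: "AE w in M. \<forall>s a. \<not> summable (\<lambda>t. \<zeta> t w s a) \<and> summable (\<lambda>t. (\<zeta> t w s a)\<^sup>2)"
  shows "AE w in M. \<forall>s a. (\<lambda>t. Q t w s a) \<longlonglongrightarrow> Qpi \<alpha> \<gamma> P \<pi> s a"
  using zeta_sum R01 dK_all
proof eventually_elim
  case (elim w)
  have div: "\<And>s a. \<not> summable (\<lambda>t. \<zeta> t w s a)" and sq: "\<And>s a. summable (\<lambda>t. (\<zeta> t w s a)\<^sup>2)"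
    using elim(1) by auto
  have r01: "\<And>t s a. 0 \<le> R t s a w \<and> R t s a w \<le> 1" using elim(2) by auto
  have z0: "(\<lambda>t. \<zeta> t w s a) \<longlonglongrightarrow> 0" for s a
  proof -
    have "(\<lambda>t. (\<zeta> t w s a)\<^sup>2) \<longlonglongrightarrow> 0" by (rule summable_LIMSEQ_zero[OF sq])
    then have "(\<lambda>t. sqrt ((\<zeta> t w s a)\<^sup>2)) \<longlonglongrightarrow> sqrt 0" by (rule tendsto_real_sqrt)
    then show ?thesis using zeta_nonneg by simp
  qed
  have rec0: "Q (Suc t) w s a = Q t w s a + 2 * \<zeta> t w s a *
      gfun \<alpha> (R t s a w + \<gamma> * Vpol \<pi> (Q t w) (S' t s a w) - Q t w s a)" for t s a
    unfolding gfun_def by (rule update)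
  obtain B where B: "\<And>t. nrm (Q t w) \<le> B"
    using path_bounded[where q="\<lambda>t. Q t w" and \<zeta>="\<lambda>t s a. \<zeta> t w s a" and r="\<lambda>t s a. R t s a w"
        and sn="\<lambda>t s a. S' t s a w", OF rec0 r01 zeta_nonneg z0] by blast
  define SS where "SS = (\<Sum>s\<in>UNIV. \<Sum>a\<in>UNIV. (\<Sum>t. (\<zeta> t w s a)\<^sup>2))"
  obtain K :: nat where K: "max B SS < real K" using reals_Archimedean2 by blast
  have sle: "(\<Sum>t. (\<zeta> t w s a)\<^sup>2) \<le> SS" for s a
  proof -
    have nn: "0 \<le> (\<Sum>t. (\<zeta> t w s a)\<^sup>2)" for s a by (rule suminf_nonneg[OF sq]) simp
    have "(\<Sum>t. (\<zeta> t w s a)\<^sup>2) \<le> (\<Sum>a\<in>UNIV. (\<Sum>t. (\<zeta> t w s a)\<^sup>2))"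
      by (rule member_le_sum[where f="\<lambda>a. \<Sum>t. (\<zeta> t w s a)\<^sup>2"]) (auto intro: nn)
    also have "\<dots> \<le> SS" unfolding SS_def
      by (rule member_le_sum[where f="\<lambda>s. \<Sum>a\<in>UNIV. \<Sum>t. (\<zeta> t w s a)\<^sup>2"]) (auto intro: sum_nonneg nn)
    finally show ?thesis .
  qed
  have ind: "indK (real K) s a t w" for s a t
    unfolding indK_def
  proof
    have "B \<le> real K" using K by simp
    then have "\<bar>Q u w s' a'\<bar> \<le> real K" for u s' a' using nrm_ge[of "Q u w" s' a'] B[of u] by linarith
    then show "\<forall>u\<in>{..t}. \<forall>s'. \<forall>a'. \<bar>Q u w s' a'\<bar> \<le> real K" by blast
    have "(\<Sum>u\<le>t. (\<zeta> u w s a)\<^sup>2) \<le> (\<Sum>u. (\<zeta> u w s a)\<^sup>2)" by (rule sum_le_suminf[OF sq]) auto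
    moreover have "SS \<le> real K" using K by simp
    ultimately show "(\<Sum>u\<le>t. (\<zeta> u w s a)\<^sup>2) \<le> real K" using sle[of s a] by linarith
  qed
  define Wn where "Wn t s a = fW s a t w (R t s a w, S' t s a w)" for t s a
  have sw: "summable (\<lambda>t. \<zeta> t w s a * Wn t s a)" for s a
  proof -
    have "summable (\<lambda>t. dK (real K) s a t w)" using elim(3) by auto
    moreover have "dK (real K) s a t w = \<zeta> t w s a * Wn t s a" for t
      unfolding dK_def Wn_def using ind by simp
    ultimately show ?thesis by simp
  qed
  have rec: "Q (Suc t) w s a = Q t w s a + 2 * \<zeta> t w s a * (hm (Q t w) s a (Q t w s a) + Wn t s a)" for t s a
    using rec0[of t s a] r01[of t s a] unfolding Wn_def fW_def by (simp add: clip_id)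
  show ?case
    using det_conv[where q="\<lambda>t. Q t w" and \<zeta>="\<lambda>t s a. \<zeta> t w s a" and w=Wn, OF Qpi_fix B rec zeta_nonneg z0 div sw]
    by blast
qed

end

theorem proposition1:
  fixes M :: "'w measure"
    and F :: "nat \<Rightarrow> 'w measure"
    and P :: "'s::finite \<Rightarrow> 'a::finite \<Rightarrow> (real \<times> 's) measure"
    and \<pi> :: "'s \<Rightarrow> 'a \<Rightarrow> real"
    and \<alpha> \<gamma> :: real
    and R :: "nat \<Rightarrow> 's \<Rightarrow> 'a \<Rightarrow> 'w \<Rightarrow> real"
    and S' :: "nat \<Rightarrow> 's \<Rightarrow> 'a \<Rightarrow> 'w \<Rightarrow> 's"
    and \<zeta> :: "nat \<Rightarrow> 'w \<Rightarrow> 's \<Rightarrow> 'a \<Rightarrow> real"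
    and Q :: "nat \<Rightarrow> 'w \<Rightarrow> 's \<Rightarrow> 'a \<Rightarrow> real"
  assumes gamma: "0 < \<gamma>" "\<gamma> < 1"
    and alpha: "0 < \<alpha>" "\<alpha> < 1"
    and policy: "\<And>s a. 0 \<le> \<pi> s a" "\<And>s. (\<Sum>a\<in>UNIV. \<pi> s a) = 1"
    and P_prob: "\<And>s a. prob_space (P s a)"
    and P_sets: "\<And>s a. sets (P s a) = sets (borel \<Otimes>\<^sub>M count_space UNIV)"
    and reward_range: "\<And>s a. AE x in P s a. 0 \<le> fst x \<and> fst x \<le> 1"
    and reward_density: "\<And>s a. \<exists>f B. f \<in> borel_measurable borel \<and> (\<forall>x. 0 \<le> f x \<and> f x \<le> B)
           \<and> distr (P s a) lborel fst = density lborel (\<lambda>x. ennreal (f x))"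
    and M_prob: "prob_space M"
    and F_sub: "\<And>t. subalgebra M (F t)"
    and F_mono: "\<And>t. sets (F t) \<subseteq> sets (F (Suc t))"
    and sample_meas: "\<And>t s a. (\<lambda>w. (R t s a w, S' t s a w))
           \<in> measurable (F (Suc t)) (borel \<Otimes>\<^sub>M count_space UNIV)"
    and sample_law: "\<And>t s a A B. A \<in> sets (F t) \<Longrightarrow> B \<in> sets (borel \<Otimes>\<^sub>M count_space UNIV) \<Longrightarrow>
           measure M (A \<inter> {w \<in> space M. (R t s a w, S' t s a w) \<in> B})
             = measure M A * measure (P s a) B"
    and Q0_meas: "\<And>s a. (\<lambda>w. Q 0 w s a) \<in> borel_measurable (F 0)"
    and zeta_meas: "\<And>t s a. (\<lambda>w. \<zeta> t w s a) \<in> borel_measurable (F t)"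
    and zeta_nonneg: "\<And>t w s a. 0 \<le> \<zeta> t w s a"
    and zeta_sum: "AE w in M. \<forall>s a. \<not> summable (\<lambda>t. \<zeta> t w s a) \<and> summable (\<lambda>t. (\<zeta> t w s a)\<^sup>2)"
    and update: "\<And>t w s a. Q (Suc t) w s a = Q t w s a + 2 * \<zeta> t w s a *
           ((1 - \<alpha>) * negpart (R t s a w + \<gamma> * Vpol \<pi> (Q t w) (S' t s a w) - Q t w s a)
            + \<alpha> * pospart (R t s a w + \<gamma> * Vpol \<pi> (Q t w) (S' t s a w) - Q t w s a))"
  shows "AE w in M. \<forall>s a. (\<lambda>t. Q t w s a) \<longlonglongrightarrow> Qpi \<alpha> \<gamma> P \<pi> s a"
proof -
  interpret sa P \<pi> \<alpha> \<gamma> M F R S' \<zeta> Q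
  proof (intro sa.intro mdp.intro sa_axioms.intro)
    show "0 < \<gamma>" "\<gamma> < 1" "0 < \<alpha>" "\<alpha> < 1" by (fact gamma(1), fact gamma(2), fact alpha(1), fact alpha(2))
    show "\<And>s a. 0 \<le> \<pi> s a" by (fact policy(1))
    show "\<And>s. (\<Sum>a\<in>UNIV. \<pi> s a) = 1" by (fact policy(2))
    show "\<And>s a. prob_space (P s a)" by (fact P_prob)
    show "\<And>s a. sets (P s a) = sets (borel \<Otimes>\<^sub>M count_space UNIV)" by (fact P_sets)
    show "\<And>s a. AE x in P s a. 0 \<le> fst x \<and> fst x \<le> 1" by (fact reward_range)
    show "prob_space M" by (fact M_prob)
  qed (fact F_sub F_mono sample_meas sample_law Q0_meas zeta_meas zeta_nonneg update)+
  show ?thesis by (rule main[OF zeta_sum])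
qed

end
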